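(* Let $a$, $b$, $c$ be pairwise coprime positive integers with $a+b+c$ even. Then for all integers $p,q\geq1$ and all $x,y,z\in\mathbb{R}$, \begin{align*} a^{1-p}b^{1-q}S_{p,q}(a,b,c:x,y,z) &=\sum_{j=1}^{p}\binom{p-1}{j-1}a^{1-j}c^{1+j-p-q}S_{p+q-j,j}(c,-a,b:z,x,y)\\ &\quad+\sum_{h=1}^{q}\binom{q-1}{h-1}(-1)^{h}b^{1-h}c^{1+h-p-q}S_{p+q-h,h}(c,b,a:z,-y,x). \end{align*}
   Context: $E_n(x)$ denotes the $n$th Euler polynomial, defined by $\frac{2e^{xt}}{e^t+1}=\sum_{n\ge0}E_n(x)\frac{t^n}{n!}$. The $n$th Euler function $\mathcal{E}_n$ ($n\ge0$) is defined by $\mathcal{E}_n(x)=E_n(x)$ for $0\le x<1$ and $\mathcal{E}_n(x+m)=(-1)^m\mathcal{E}_n(x)$ for $m\in\mathbb{Z}$. For integers $a,b$, a positive integer $c$, integers $p,q\ge1$ and real $x,y,z$, define $$S_{p,q}(a,b,c:x,y,z)=\sum_{\mu=0}^{c-1}(-1)^{\mu}\mathcal{E}_{p-1}\Big(a\frac{\mu+z}{c}+x\Big)\mathcal{E}_{q-1}\Big(b\frac{\mu+z}{c}+y\Big).$$ *)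

theory Defs
  imports "HOL-Analysis.Analysis" "HOL-Computational_Algebra.Formal_Power_Series"
begin

definition euler_poly :: "nat \<Rightarrow> real \<Rightarrow> real" where
  "euler_poly n x = fact n * fps_nth (2 * fps_exp x * inverse (fps_exp 1 + 1)) n"

text \<open>Euler function: equals E_n on [0,1) and satisfies f(x+m) = (-1)^m f(x).\<close>
definition euler_fun :: "nat \<Rightarrow> real \<Rightarrow> real" where
  "euler_fun n x = (-1) powi \<lfloor>x\<rfloor> * euler_poly n (x - of_int \<lfloor>x\<rfloor>)"

definition S :: "nat \<Rightarrow> nat \<Rightarrow> int \<Rightarrow> int \<Rightarrow> int \<Rightarrow> real \<Rightarrow> real \<Rightarrow> real \<Rightarrow> real" where
  "S p q a b c x y z = (\<Sum>\<mu>\<in>{0..<c}. (-1) powi \<mu> *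
      euler_fun (p - 1) (of_int a * (of_int \<mu> + z) / of_int c + x) *
      euler_fun (q - 1) (of_int b * (of_int \<mu> + z) / of_int c + y))"

end

theory Submission
  imports Defs "HOL-Computational_Algebra.Polynomial"
begin

definition scl :: "real \<Rightarrow> real fps \<Rightarrow> real fps" where
  "scl t f = Abs_fps (\<lambda>n. t^n * fps_nth f n)"

lemma scl_nth [simp]: "fps_nth (scl t f) n = t^n * fps_nth f n"
  by (simp add: scl_def)

lemma scl_mult: "scl t (f*g) = scl t f * scl t g"
proof (rule fps_ext)
  fix n
  have "fps_nth (scl t (f*g)) n = (\<Sum>i=0..n. t^n * (fps_nth f i * fps_nth g (n-i)))"
    by (simp add: fps_mult_nth sum_distrib_left)
  also have "\<dots> = (\<Sum>i=0..n. (t^i * fps_nth f i) * (t^(n-i) * fps_nth g (n-i)))"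
  proof (rule sum.cong)
    fix i assume "i \<in> {0..n}"
    then have "t^n = t^i * t^(n-i)" by (simp add: power_add[symmetric])
    then show "t^n * (fps_nth f i * fps_nth g (n-i)) = (t^i * fps_nth f i) * (t^(n-i) * fps_nth g (n-i))" by simp
  qed simp
  also have "\<dots> = fps_nth (scl t f * scl t g) n" by (simp add: fps_mult_nth)
  finally show "fps_nth (scl t (f*g)) n = fps_nth (scl t f * scl t g) n" .
qed

lemma scl_add: "scl t (f+g) = scl t f + scl t g"
  by (rule fps_ext) (simp add: algebra_simps)

lemma scl_one: "scl t 1 = 1"
  by (rule fps_ext) (simp add: fps_one_nth)

lemma scl_two: "scl t 2 = 2"
  by (rule fps_ext) (simp add: fps_numeral_nth)

lemma scl_exp: "scl t (fps_exp v) = fps_exp (t * v)"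
  by (rule fps_ext) (simp add: power_mult_distrib)

lemma scl_inverse:
  assumes "fps_nth f 0 \<noteq> 0"
  shows "scl t (inverse f) = inverse (scl t f)"
proof -
  have "scl t f * scl t (inverse f) = 1"
    using assms by (simp add: scl_mult[symmetric] inverse_mult_eq_1' scl_one)
  then show ?thesis by (rule fps_inverse_unique[symmetric])
qed

definition eg :: "real \<Rightarrow> real fps" where
  "eg v = 2 * fps_exp v * inverse (fps_exp 1 + 1)"

lemma euler_poly_eg: "euler_poly n v = fact n * fps_nth (eg v) n"
  by (simp add: euler_poly_def eg_def)

lemma scaled_eg: "fps_nth (2 * fps_exp (t * v) * inverse (fps_exp t + 1)) n = t^n * fps_nth (eg v) n"
proof -
  have h0: "fps_nth (fps_exp 1 + 1 :: real fps) 0 \<noteq> 0" by simp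
  have "scl t (eg v) = 2 * fps_exp (t * v) * inverse (fps_exp t + 1)"
    by (simp only: eg_def scl_mult scl_two scl_exp scl_inverse[OF h0] scl_add scl_one mult_1_right)
  then show ?thesis by (metis scl_nth)
qed

definition gg :: "real \<Rightarrow> real \<Rightarrow> real fps" where
  "gg w t = fps_const ((-1) powi \<lfloor>w\<rfloor>) * fps_exp (t * (w - of_int \<lfloor>w\<rfloor>))"

definition DD :: "real \<Rightarrow> real fps" where
  "DD t = inverse (fps_exp t + 1)"

definition EGs :: "real \<Rightarrow> real \<Rightarrow> real fps" where
  "EGs t w = Abs_fps (\<lambda>n. euler_fun n w * t^n / fact n)"

lemma EG_eq: "EGs t w = 2 * gg w t * DD t"
proof (rule fps_ext)
  fix n
  let ?f = "w - of_int \<lfloor>w\<rfloor>"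
  have "fps_nth (2 * gg w t * DD t) n = (-1) powi \<lfloor>w\<rfloor> * fps_nth (2 * fps_exp (t * ?f) * inverse (fps_exp t + 1)) n"
  proof -
    have "2 * gg w t * DD t = fps_const ((-1) powi \<lfloor>w\<rfloor>) * (2 * fps_exp (t * ?f) * inverse (fps_exp t + 1))"
      unfolding gg_def DD_def by (simp only: ac_simps)
    then show ?thesis by (simp only: fps_mult_left_const_nth)
  qed
  also have "\<dots> = (-1) powi \<lfloor>w\<rfloor> * (t^n * fps_nth (eg ?f) n)"
    by (simp add: scaled_eg)
  also have "\<dots> = euler_fun n w * t^n / fact n"
    by (simp add: euler_fun_def euler_poly_eg)
  finally show "fps_nth (EGs t w) n = fps_nth (2 * gg w t * DD t) n" by (simp add: EGs_def)
qed

lemma m1powi: "(-1::real) powi n = (if even n then 1 else -1)"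
  by (simp add: power_int_minus_left)


lemma DD_mul: "(1 + fps_exp t) * DD t = 1"
proof -
  have "fps_nth (fps_exp t + 1 :: real fps) 0 \<noteq> 0" by simp
  then have "(fps_exp t + 1) * inverse (fps_exp t + 1) = 1" by (rule inverse_mult_eq_1')
  then show ?thesis by (simp add: DD_def add.commute)
qed

lemma Xneg_DD: "fps_exp (-t) * DD (-t) = DD t"
proof -
  have e: "fps_exp t * fps_exp (-t) = (1::real fps)"
    by (simp add: fps_exp_add_mult[symmetric])
  have "(fps_exp t + 1) * (fps_exp (-t) * DD (-t)) = (1 + fps_exp (-t)) * DD (-t)"
    by (simp add: algebra_simps e)
  also have "\<dots> = 1" by (rule DD_mul)
  finally have "inverse (fps_exp t + 1) = fps_exp (-t) * DD (-t)" by (rule fps_inverse_unique)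
  then show ?thesis by (simp add: DD_def)
qed

lemma gg_refl:
  assumes "w \<notin> \<int>"
  shows "gg (-w) (-t) = - (fps_exp (-t) * gg w t)"
proof -
  have ne: "w \<noteq> of_int \<lfloor>w\<rfloor>" using assms by (metis Ints_of_int)
  have fl: "\<lfloor>-w\<rfloor> = - \<lfloor>w\<rfloor> - 1"
    using ne by (simp add: floor_minus ceiling_altdef)
  have s: "(-1::real) powi (- \<lfloor>w\<rfloor> - 1) = - ((-1) powi \<lfloor>w\<rfloor>)"
    by (simp add: m1powi)
  have x: "fps_exp (- t * (- w - of_int (- \<lfloor>w\<rfloor> - 1))) = fps_exp (-t) * fps_exp (t * (w - of_int \<lfloor>w\<rfloor>))"
    by (simp add: fps_exp_add_mult[symmetric] algebra_simps)
  show ?thesis unfolding gg_def fl s x fps_const_neg[symmetric] by (simp only: mult_minus_left mult_minus_right mult.left_commute)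
qed

lemma EG_refl:
  assumes "w \<notin> \<int>"
  shows "EGs (-t) (-w) = - EGs t w"
proof -
  have "EGs (-t) (-w) = - (2 * gg w t * (fps_exp (-t) * DD (-t)))"
    unfolding EG_eq gg_refl[OF assms] by (simp add: algebra_simps)
  then show ?thesis by (simp add: Xneg_DD EG_eq)
qed

lemma euler_fun_shift: "euler_fun n (w + of_int k) = (-1) powi k * euler_fun n w"
proof -
  have f: "\<lfloor>w + of_int k\<rfloor> = \<lfloor>w\<rfloor> + k" by simp
  have d: "w + of_int k - of_int (\<lfloor>w\<rfloor> + k) = w - of_int \<lfloor>w\<rfloor>" by simp
  have p: "(-1::real) powi (\<lfloor>w\<rfloor> + k) = (-1) powi k * (-1) powi \<lfloor>w\<rfloor>"
    by (subst power_int_add) (auto simp: mult.commute)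
  show ?thesis unfolding euler_fun_def f d p by (simp only: mult.assoc)
qed

lemma EG_shift: "EGs t (w + of_int k) = fps_const ((-1) powi k) * EGs t w"
  by (rule fps_ext) (simp add: EGs_def euler_fun_shift)

definition psi :: "real \<Rightarrow> int \<Rightarrow> real fps" where
  "psi t m = fps_const ((-1) powi m) * fps_exp (- (of_int m * t))"

lemma psi_prev: "psi t (n - 1) = - (psi t n * fps_exp t)"
proof -
  have e: "fps_exp (- (of_int (n - 1) * t)) = fps_exp (- (of_int n * t)) * fps_exp t"
    by (simp add: fps_exp_add_mult[symmetric] algebra_simps)
  have s: "(-1::real) powi (n - 1) = - ((-1) powi n)" by (simp add: m1powi)
  show ?thesis unfolding psi_def e s fps_const_neg[symmetric] by (simp only: mult_minus_left mult.assoc)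
qed

lemma psi_add: "psi t (m + k) = psi t m * psi t k"
proof -
  have e: "fps_exp (- (of_int (m + k) * t)) = fps_exp (- (of_int m * t)) * fps_exp (- (of_int k * t))"
    by (simp add: fps_exp_add_mult[symmetric] algebra_simps)
  have s: "(-1::real) powi (m + k) = (-1) powi m * (-1) powi k" by (simp add: power_int_add)
  show ?thesis unfolding psi_def e s fps_const_mult[symmetric] by (simp only: ac_simps)
qed

lemma gg_psi: "gg w t = psi t \<lfloor>w\<rfloor> * fps_exp (t * w)"
proof -
  have "fps_exp (t * (w - of_int \<lfloor>w\<rfloor>)) = fps_exp (- (of_int \<lfloor>w\<rfloor> * t)) * fps_exp (t * w)"
    by (simp add: fps_exp_add_mult[symmetric] algebra_simps)
  then show ?thesis unfolding gg_def psi_def by (simp add: algebra_simps)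
qed

lemma gg_int: "gg (of_int n) t = fps_const ((-1) powi n)"
  by (simp only: gg_def floor_of_int diff_self mult_zero_right fps_exp_0 mult_1_right)


lemma floor_left_nonint:
  fixes w :: real
  assumes "w \<notin> \<int>"
  shows "\<exists>e>0. \<forall>t. w - e < t \<and> t \<le> w \<longrightarrow> \<lfloor>t\<rfloor> = \<lfloor>w\<rfloor>"
proof -
  have ne: "w \<noteq> of_int \<lfloor>w\<rfloor>" using assms by (metis Ints_of_int)
  have "of_int \<lfloor>w\<rfloor> \<le> w" by simp
  with ne have pos: "w - of_int \<lfloor>w\<rfloor> > 0" by linarith
  have "\<forall>t. w - (w - of_int \<lfloor>w\<rfloor>) < t \<and> t \<le> w \<longrightarrow> \<lfloor>t\<rfloor> = \<lfloor>w\<rfloor>"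
  proof (intro allI impI)
    fix t assume h: "w - (w - of_int \<lfloor>w\<rfloor>) < t \<and> t \<le> w"
    have hw: "w < of_int \<lfloor>w\<rfloor> + 1" by linarith
    show "\<lfloor>t\<rfloor> = \<lfloor>w\<rfloor>" unfolding floor_eq_iff using h hw by linarith
  qed
  with pos show ?thesis by blast
qed

lemma floor_left_int:
  fixes t :: real
  assumes "of_int n - 1 < t" "t < of_int n"
  shows "\<lfloor>t\<rfloor> = n - 1"
  unfolding floor_eq_iff using assms by linarith

lemma line_left_nonint:
  fixes k s d :: real
  assumes "k > 0" "k * s + d \<notin> \<int>"
  shows "\<exists>e>0. \<forall>t. s - e < t \<and> t < s \<longrightarrow> \<lfloor>k * t + d\<rfloor> = \<lfloor>k * s + d\<rfloor>"
proof -
  obtain e where e: "e > 0" "\<forall>t. k * s + d - e < t \<and> t \<le> k * s + d \<longrightarrow> \<lfloor>t\<rfloor> = \<lfloor>k * s + d\<rfloor>"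
    using floor_left_nonint[OF assms(2)] by blast
  have "\<forall>t. s - e / k < t \<and> t < s \<longrightarrow> \<lfloor>k * t + d\<rfloor> = \<lfloor>k * s + d\<rfloor>"
  proof (intro allI impI)
    fix t assume h: "s - e / k < t \<and> t < s"
    have "k * (s - e / k) < k * t" using h assms(1) by (intro mult_strict_left_mono) auto
    moreover have "k * (s - e / k) = k * s - e" using assms(1) by (simp add: field_simps)
    ultimately have 1: "k * s + d - e < k * t + d" by linarith
    have "k * t \<le> k * s" using h assms(1) by (intro mult_left_mono) auto
    then have 2: "k * t + d \<le> k * s + d" by linarith
    show "\<lfloor>k * t + d\<rfloor> = \<lfloor>k * s + d\<rfloor>" using e(2)[rule_format, OF conjI[OF 1 2]] .

  qed
  moreover have "e / k > 0" using e(1) assms(1) by simp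
  ultimately show ?thesis by blast
qed

lemma line_left_int:
  fixes k s d :: real
  assumes "k > 0" "k * s + d = of_int n"
  shows "\<exists>e>0. \<forall>t. s - e < t \<and> t < s \<longrightarrow> \<lfloor>k * t + d\<rfloor> = n - 1"
proof -
  have "\<forall>t. s - 1 / k < t \<and> t < s \<longrightarrow> \<lfloor>k * t + d\<rfloor> = n - 1"
  proof (intro allI impI)
    fix t assume h: "s - 1 / k < t \<and> t < s"
    have "k * (s - 1 / k) < k * t" using h assms(1) by (intro mult_strict_left_mono) auto
    moreover have "k * (s - 1 / k) = k * s - 1" using assms(1) by (simp add: field_simps)
    ultimately have 1: "of_int n - 1 < k * t + d" using assms(2) by linarith
    have "k * t < k * s" using h assms(1) by (intro mult_strict_left_mono) auto
    then have 2: "k * t + d < of_int n" using assms(2) by linarith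
    show "\<lfloor>k * t + d\<rfloor> = n - 1" using floor_left_int[OF 1 2] .
  qed
  moreover have "1 / k > 0" using assms(1) by simp
  ultimately show ?thesis by blast
qed

lemma floor_const_line:
  fixes k l u d :: real
  assumes "k > 0" "l \<le> u" "\<forall>s. l < s \<and> s \<le> u \<longrightarrow> k * s + d \<notin> \<int>"
  shows "\<lfloor>k * l + d\<rfloor> = \<lfloor>k * u + d\<rfloor>"
proof (rule ccontr)
  assume ne: "\<lfloor>k * l + d\<rfloor> \<noteq> \<lfloor>k * u + d\<rfloor>"
  have "k * l + d \<le> k * u + d" using assms by (simp add: mult_left_mono)
  then have le: "\<lfloor>k * l + d\<rfloor> \<le> \<lfloor>k * u + d\<rfloor>" by (rule floor_mono)
  define m where "m = \<lfloor>k * u + d\<rfloor>"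
  define s where "s = (of_int m - d) / k"
  have ks: "k * s + d = of_int m" using assms(1) by (simp add: s_def)
  have "\<lfloor>k * l + d\<rfloor> + 1 \<le> m" using ne le m_def by simp
  then have "k * l + d < of_int m" by linarith
  then have "l < s" using ks assms(1) by (smt (verit) mult_less_cancel_left_pos)
  moreover have "of_int m \<le> k * u + d" using m_def by simp
  then have "s \<le> u" using ks assms(1) by (smt (verit) mult_le_cancel_left_pos)
  ultimately have "k * s + d \<notin> \<int>" using assms(3) by blast
  then show False using ks by simp
qed

lemma telescope:
  fixes f :: "real \<Rightarrow> 'v::ab_group_add"
  assumes "finite J" "J \<subseteq> {l0<..u0}" "l0 \<le> u0"
    and "\<And>l u. l0 \<le> l \<Longrightarrow> l \<le> u \<Longrightarrow> u \<le> u0 \<Longrightarrow> (\<forall>s\<in>J. \<not> (l < s \<and> s \<le> u)) \<Longrightarrow> f l = f u"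
    and "\<And>s. s \<in> J \<Longrightarrow> \<exists>e>0. \<forall>t. s - e < t \<and> t < s \<longrightarrow> f s - f t = D s"
  shows "f u0 - f l0 = (\<Sum>s\<in>J. D s)"
  using assms
proof (induction "card J" arbitrary: J u0 rule: less_induct)
  case less
  show ?case
  proof (cases "J = {}")
    case True
    then have "f l0 = f u0" using less.prems(4)[of l0 u0] less.prems(3) by simp
    then show ?thesis using True by simp
  next
    case False
    define m where "m = Max J"
    have mJ: "m \<in> J" using False less.prems(1) m_def by simp
    have mmax: "\<forall>s\<in>J. s \<le> m" using less.prems(1) m_def by simp
    have mint: "l0 < m" "m \<le> u0" using mJ less.prems(2) by auto
    have nos: "\<forall>s\<in>J. \<not> (m < s \<and> s \<le> u0)"
    proof
      fix s assume "s \<in> J"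
      then have "s \<le> m" using mmax by blast
      then show "\<not> (m < s \<and> s \<le> u0)" by simp
    qed
    have fm: "f m = f u0"
      using less.prems(4)[of m u0] mint nos by simp
    obtain e where e: "e > 0" "\<forall>t. m - e < t \<and> t < m \<longrightarrow> f m - f t = D m"
      using less.prems(5)[OF mJ] by blast
    define J' where "J' = J - {m}"
    have finJ': "finite J'" using less.prems(1) J'_def by simp
    define b where "b = Max ({l0, m - e} \<union> J')"
    have fin: "finite ({l0, m - e} \<union> J')" using finJ' by simp
    have ball: "\<forall>x\<in>{l0, m - e} \<union> J'. x \<le> b"
      unfolding b_def using Max_ge[OF fin] by blast
    have bmem: "l0 \<le> b" "m - e \<le> b" "\<forall>s\<in>J'. s \<le> b"
      using ball by auto
    have J'lt: "\<forall>s\<in>J'. s < m"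
    proof
      fix s assume "s \<in> J'"
      then have "s \<in> J" "s \<noteq> m" using J'_def by auto
      then show "s < m" using mmax by force
    qed
    have "b < m"
      unfolding b_def using finJ' J'lt mint e(1) by (subst Max_less_iff) auto
    define t where "t = (b + m) / 2"
    have t: "b < t" "t < m" using \<open>b < m\<close> t_def by auto
    have cardlt: "card J' < card J" using less.prems(1) mJ J'_def by (metis card_Diff1_less)
    have IH: "f t - f l0 = (\<Sum>s\<in>J'. D s)"
    proof (rule less.hyps[OF cardlt finJ'])
      show "J' \<subseteq> {l0<..t}"
      proof
        fix s assume "s \<in> J'"
        then have "s \<in> J" "s \<le> b" using J'_def bmem by auto
        then show "s \<in> {l0<..t}" using less.prems(2) t by auto
      qed
      show "l0 \<le> t" using bmem t by simp
      show "f l = f u" if "l0 \<le> l" "l \<le> u" "u \<le> t" "\<forall>s\<in>J'. \<not> (l < s \<and> s \<le> u)" for l u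
      proof (rule less.prems(4))
        show "l0 \<le> l" "l \<le> u" using that by auto
        show "u \<le> u0" using that t mint by simp
        show "\<forall>s\<in>J. \<not> (l < s \<and> s \<le> u)"
        proof
          fix s assume "s \<in> J"
          show "\<not> (l < s \<and> s \<le> u)"
          proof (cases "s = m")
            case True then show ?thesis using that t by simp
          next
            case False
            then have "s \<in> J'" using \<open>s \<in> J\<close> J'_def by simp
            then show ?thesis using that(4) by blast
          qed
        qed
      qed
      show "\<exists>e>0. \<forall>t. s - e < t \<and> t < s \<longrightarrow> f s - f t = D s" if "s \<in> J'" for s
        using that less.prems(5) J'_def by blast
    qed
    have "m - e < t" using t bmem by simp
    then have "f m - f t = D m" using e(2) t by blast
    then have "f u0 - f l0 = D m + (\<Sum>s\<in>J'. D s)" using IH fm by (simp add: algebra_simps)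
    also have "\<dots> = (\<Sum>s\<in>J. D s)"
      using less.prems(1) mJ J'_def by (simp add: sum.remove)
    finally show ?thesis .
  qed
qed

lemma sum_window:
  fixes g :: "int \<Rightarrow> 'v::comm_monoid_add"
  assumes "P \<ge> 0" "\<And>n. g (n + P) = g n"
  shows "(\<Sum>n\<in>{k..<k+P}. g n) = (\<Sum>n\<in>{0..<P}. g n)"
proof -
  define F where "F k = (\<Sum>n\<in>{k..<k+P}. g n)" for k
  have step: "F (k + 1) = F k" for k
  proof (cases "P = 0")
    case True then show ?thesis by (simp add: F_def)
  next
    case False
    then have P: "P > 0" using assms(1) by simp
    have s1: "{k..<k+P} = insert k {k+1..<k+P}" using P by auto
    have s2: "{k+1..<k+1+P} = insert (k+P) {k+1..<k+P}" using P by auto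
    have "F (k+1) = g (k+P) + (\<Sum>n\<in>{k+1..<k+P}. g n)"
      unfolding F_def s2 by (subst sum.insert) auto
    also have "\<dots> = g k + (\<Sum>n\<in>{k+1..<k+P}. g n)" using assms(2)[of k] by simp
    also have "\<dots> = F k" unfolding F_def s1 by (subst sum.insert) auto
    finally show ?thesis .
  qed
  have "F k = F 0"
  proof (induction k rule: int_induct[where k = 0])
    case base then show ?case by simp
  next
    case (step1 i) then show ?case using step[of i] by simp
  next
    case (step2 i) then show ?case using step[of "i - 1"] by simp
  qed
  then show ?thesis by (simp add: F_def)
qed

lemma jump_floor3:
  fixes k1 k2 k3 s d1 d2 d3 :: real
  assumes "k1 > 0" "k2 > 0" "k3 > 0" "k1 * s + d1 = of_int n" "k2 * s + d2 \<notin> \<int>" "k3 * s + d3 \<notin> \<int>"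
  shows "\<exists>e>0. \<forall>t. s - e < t \<and> t < s \<longrightarrow>
     \<lfloor>k1 * t + d1\<rfloor> = n - 1 \<and> \<lfloor>k2 * t + d2\<rfloor> = \<lfloor>k2 * s + d2\<rfloor> \<and> \<lfloor>k3 * t + d3\<rfloor> = \<lfloor>k3 * s + d3\<rfloor>"
proof -
  obtain e1 where e1: "e1 > 0" "\<forall>t. s - e1 < t \<and> t < s \<longrightarrow> \<lfloor>k1 * t + d1\<rfloor> = n - 1"
    using line_left_int[OF assms(1,4)] by blast
  obtain e2 where e2: "e2 > 0" "\<forall>t. s - e2 < t \<and> t < s \<longrightarrow> \<lfloor>k2 * t + d2\<rfloor> = \<lfloor>k2 * s + d2\<rfloor>"
    using line_left_nonint[OF assms(2,5)] by blast
  obtain e3 where e3: "e3 > 0" "\<forall>t. s - e3 < t \<and> t < s \<longrightarrow> \<lfloor>k3 * t + d3\<rfloor> = \<lfloor>k3 * s + d3\<rfloor>"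
    using line_left_nonint[OF assms(3,6)] by blast
  define e where "e = min e1 (min e2 e3)"
  have "e > 0" using e1 e2 e3 e_def by simp
  moreover have "\<forall>t. s - e < t \<and> t < s \<longrightarrow>
     \<lfloor>k1 * t + d1\<rfloor> = n - 1 \<and> \<lfloor>k2 * t + d2\<rfloor> = \<lfloor>k2 * s + d2\<rfloor> \<and> \<lfloor>k3 * t + d3\<rfloor> = \<lfloor>k3 * s + d3\<rfloor>"
  proof (intro allI impI)
    fix t assume h: "s - e < t \<and> t < s"
    have "s - e1 < t" "s - e2 < t" "s - e3 < t" using h e_def by auto
    then show "\<lfloor>k1 * t + d1\<rfloor> = n - 1 \<and> \<lfloor>k2 * t + d2\<rfloor> = \<lfloor>k2 * s + d2\<rfloor> \<and> \<lfloor>k3 * t + d3\<rfloor> = \<lfloor>k3 * s + d3\<rfloor>"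
      using e1(2) e2(2) e3(2) h by blast
  qed
  ultimately show ?thesis by blast
qed

lemma crossing_set:
  fixes k :: int and d s0 :: real
  assumes "k > 0"
  shows "{s. s0 < s \<and> s \<le> s0 + 1 \<and> of_int k * s + d \<in> \<int>} =
    (\<lambda>n. (of_int n - d) / of_int k) ` {\<lfloor>of_int k * s0 + d\<rfloor> + 1 ..< \<lfloor>of_int k * s0 + d\<rfloor> + 1 + k}"
proof (intro equalityI subsetI)
  fix s assume "s \<in> {s. s0 < s \<and> s \<le> s0 + 1 \<and> of_int k * s + d \<in> \<int>}"
  then have h: "s0 < s" "s \<le> s0 + 1" "of_int k * s + d \<in> \<int>" by auto
  obtain n where n: "of_int k * s + d = of_int n" using h(3) Ints_cases by metis
  have kp: "(0::real) < of_int k" using assms by simp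
  have "of_int k * s0 < of_int k * s" using h(1) kp by simp
  then have "of_int k * s0 + d < of_int n" using n by linarith
  then have 1: "\<lfloor>of_int k * s0 + d\<rfloor> < n" by (meson floor_less_iff less_add_one less_trans)
  have "of_int k * s \<le> of_int k * (s0 + 1)" using h(2) kp by simp
  then have "of_int n \<le> of_int k * s0 + d + of_int k" using n by (simp add: algebra_simps)
  then have "of_int (n - k) \<le> of_int k * s0 + d" by simp
  then have "n - k \<le> \<lfloor>of_int k * s0 + d\<rfloor>" by (simp only: le_floor_iff)
  then have 2: "n < \<lfloor>of_int k * s0 + d\<rfloor> + 1 + k" by simp
  have "s = (of_int n - d) / of_int k" using n kp by (simp add: field_simps)
  then show "s \<in> (\<lambda>n. (of_int n - d) / of_int k) ` {\<lfloor>of_int k * s0 + d\<rfloor> + 1 ..< \<lfloor>of_int k * s0 + d\<rfloor> + 1 + k}"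
    using 1 2 by auto
next
  fix s assume "s \<in> (\<lambda>n. (of_int n - d) / of_int k) ` {\<lfloor>of_int k * s0 + d\<rfloor> + 1 ..< \<lfloor>of_int k * s0 + d\<rfloor> + 1 + k}"
  then obtain n where n: "s = (of_int n - d) / of_int k" "\<lfloor>of_int k * s0 + d\<rfloor> + 1 \<le> n" "n < \<lfloor>of_int k * s0 + d\<rfloor> + 1 + k"
    by auto
  have kp: "(0::real) < of_int k" using assms by simp
  have ls: "of_int k * s + d = of_int n" using n(1) kp by (simp add: field_simps)
  have "of_int k * s0 + d < of_int (\<lfloor>of_int k * s0 + d\<rfloor> + 1)" by simp
  also have "\<dots> \<le> of_int n" using n(2) by linarith
  finally have "of_int k * s0 < of_int k * s" using ls by linarith
  then have 1: "s0 < s" using kp by simp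
  have "n \<le> \<lfloor>of_int k * s0 + d\<rfloor> + k" using n(3) by simp
  then have "(of_int n::real) \<le> of_int \<lfloor>of_int k * s0 + d\<rfloor> + of_int k" by linarith
  also have "\<dots> \<le> of_int k * s0 + d + of_int k" by simp
  finally have "of_int k * s \<le> of_int k * (s0 + 1)" using ls by (simp add: algebra_simps)
  then have 2: "s \<le> s0 + 1" using kp by simp
  show "s \<in> {s. s0 < s \<and> s \<le> s0 + 1 \<and> of_int k * s + d \<in> \<int>}"
    using 1 2 ls by simp
qed

lemma crossing_inj:
  fixes k :: int and d :: real
  assumes "k \<noteq> 0"
  shows "inj_on (\<lambda>n. (of_int n - d) / of_int k) W"
  using assms by (intro inj_onI) (simp add: divide_cancel_right)

locale tri =
  fixes k1 k2 k3 :: int and d1 d2 d3 t1 t2 t3 :: real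
  assumes pos1: "k1 > 0" and pos2: "k2 > 0" and pos3: "k3 > 0"
    and ev: "even (k1 + k2 + k3)"
    and bal: "of_int k1 * t1 + of_int k2 * t2 + of_int k3 * t3 = 0"
    and g12: "\<And>s. of_int k1 * s + d1 \<in> \<int> \<Longrightarrow> of_int k2 * s + d2 \<notin> \<int>"
    and g13: "\<And>s. of_int k1 * s + d1 \<in> \<int> \<Longrightarrow> of_int k3 * s + d3 \<notin> \<int>"
    and g23: "\<And>s. of_int k2 * s + d2 \<in> \<int> \<Longrightarrow> of_int k3 * s + d3 \<notin> \<int>"
begin

definition HF :: "real \<Rightarrow> real fps" where
  "HF s = fps_exp (t1 * d1 + t2 * d2 + t3 * d3) * psi t1 \<lfloor>of_int k1 * s + d1\<rfloor>
     * psi t2 \<lfloor>of_int k2 * s + d2\<rfloor> * psi t3 \<lfloor>of_int k3 * s + d3\<rfloor>"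

lemma HF_gg: "HF s = gg (of_int k1 * s + d1) t1 * gg (of_int k2 * s + d2) t2 * gg (of_int k3 * s + d3) t3"
proof -
  have "t1 * (of_int k1 * s + d1) + t2 * (of_int k2 * s + d2) + t3 * (of_int k3 * s + d3)
      = (of_int k1 * t1 + of_int k2 * t2 + of_int k3 * t3) * s + (t1 * d1 + t2 * d2 + t3 * d3)"
    by (simp add: algebra_simps)
  then have lin: "t1 * (of_int k1 * s + d1) + t2 * (of_int k2 * s + d2) + t3 * (of_int k3 * s + d3)
      = t1 * d1 + t2 * d2 + t3 * d3" using bal by simp
  have xe: "fps_exp (t1 * d1 + t2 * d2 + t3 * d3) = fps_exp (t1 * (of_int k1 * s + d1)) *
      fps_exp (t2 * (of_int k2 * s + d2)) * fps_exp (t3 * (of_int k3 * s + d3))"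
    unfolding lin[symmetric] by (simp only: fps_exp_add_mult)
  show ?thesis unfolding HF_def gg_psi xe by (simp only: ac_simps)
qed

lemma psi_bal: "psi t1 k1 * psi t2 k2 * psi t3 k3 = 1"
proof -
  have s: "(-1::real) powi k1 * (-1) powi k2 * (-1) powi k3 = 1"
  proof -
    have "(-1::real) powi k1 * (-1) powi k2 * (-1) powi k3 = (-1) powi (k1 + k2 + k3)"
      by (simp add: power_int_add)
    also have "\<dots> = 1" using ev by (simp add: m1powi)
    finally show ?thesis .
  qed
  have x: "fps_exp (- (of_int k1 * t1)) * fps_exp (- (of_int k2 * t2)) * fps_exp (- (of_int k3 * t3)) = (1::real fps)"
  proof -
    have "fps_exp (- (of_int k1 * t1)) * fps_exp (- (of_int k2 * t2)) * fps_exp (- (of_int k3 * t3))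
        = fps_exp (- (of_int k1 * t1) + - (of_int k2 * t2) + - (of_int k3 * t3))"
      by (simp only: fps_exp_add_mult)
    also have "- (of_int k1 * t1) + - (of_int k2 * t2) + - (of_int k3 * t3) = (0::real)"
      using bal by linarith
    finally show ?thesis by simp
  qed
  have "psi t1 k1 * psi t2 k2 * psi t3 k3 = fps_const ((-1) powi k1 * (-1) powi k2 * (-1) powi k3) *
      (fps_exp (- (of_int k1 * t1)) * fps_exp (- (of_int k2 * t2)) * fps_exp (- (of_int k3 * t3)))"
    unfolding psi_def fps_const_mult[symmetric] by (simp only: ac_simps)
  then show ?thesis unfolding s x by simp
qed

lemma HF_period: "HF (s + 1) = HF s"
proof -
  have e1: "of_int k1 * (s + 1) + d1 = (of_int k1 * s + d1) + of_int k1" by (simp add: algebra_simps)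
  have e2: "of_int k2 * (s + 1) + d2 = (of_int k2 * s + d2) + of_int k2" by (simp add: algebra_simps)
  have e3: "of_int k3 * (s + 1) + d3 = (of_int k3 * s + d3) + of_int k3" by (simp add: algebra_simps)
  have "HF (s + 1) = HF s * (psi t1 k1 * psi t2 k2 * psi t3 k3)"
    unfolding HF_def e1 e2 e3 floor_add_int[symmetric] psi_add by (simp only: ac_simps)
  then show ?thesis by (simp add: psi_bal)
qed

lemma HF_const:
  assumes "l \<le> u"
    and "\<And>s. l < s \<Longrightarrow> s \<le> u \<Longrightarrow> of_int k1 * s + d1 \<notin> \<int> \<and> of_int k2 * s + d2 \<notin> \<int> \<and> of_int k3 * s + d3 \<notin> \<int>"
  shows "HF l = HF u"
proof -
  have "\<lfloor>of_int k1 * l + d1\<rfloor> = \<lfloor>of_int k1 * u + d1\<rfloor>"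
    using pos1 assms by (intro floor_const_line) auto
  moreover have "\<lfloor>of_int k2 * l + d2\<rfloor> = \<lfloor>of_int k2 * u + d2\<rfloor>"
    using pos2 assms by (intro floor_const_line) auto
  moreover have "\<lfloor>of_int k3 * l + d3\<rfloor> = \<lfloor>of_int k3 * u + d3\<rfloor>"
    using pos3 assms by (intro floor_const_line) auto
  ultimately show ?thesis unfolding HF_def by simp
qed

lemma jump1:
  assumes "of_int k1 * s + d1 = of_int n"
  shows "\<exists>e>0. \<forall>t. s - e < t \<and> t < s \<longrightarrow> HF s - HF t = HF s * (1 + fps_exp t1)"
proof -
  have ni: "of_int k2 * s + d2 \<notin> \<int>" "of_int k3 * s + d3 \<notin> \<int>"
    using g12[of s] g13[of s] assms by (metis Ints_of_int)+
  obtain e where e: "e > 0" "\<forall>t. s - e < t \<and> t < s \<longrightarrow>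
     \<lfloor>of_int k1 * t + d1\<rfloor> = n - 1 \<and> \<lfloor>of_int k2 * t + d2\<rfloor> = \<lfloor>of_int k2 * s + d2\<rfloor> \<and> \<lfloor>of_int k3 * t + d3\<rfloor> = \<lfloor>of_int k3 * s + d3\<rfloor>"
    using jump_floor3[of "of_int k1" "of_int k2" "of_int k3" s d1 n d2 d3] pos1 pos2 pos3 assms ni by auto
  have "HF s - HF t = HF s * (1 + fps_exp t1)" if "s - e < t \<and> t < s" for t
  proof -
    have fl: "\<lfloor>of_int k1 * t + d1\<rfloor> = n - 1" "\<lfloor>of_int k2 * t + d2\<rfloor> = \<lfloor>of_int k2 * s + d2\<rfloor>"
      "\<lfloor>of_int k3 * t + d3\<rfloor> = \<lfloor>of_int k3 * s + d3\<rfloor>" using e(2) that by auto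
    have fs: "\<lfloor>of_int k1 * s + d1\<rfloor> = n" using assms by simp
    have "HF t = - (HF s * fps_exp t1)"
      unfolding HF_def fl fs psi_prev by (simp only: ac_simps mult_minus_left mult_minus_right)
    then show ?thesis by (simp add: algebra_simps)
  qed
  with e(1) show ?thesis by blast
qed

lemma jump2:
  assumes "of_int k2 * s + d2 = of_int n"
  shows "\<exists>e>0. \<forall>t. s - e < t \<and> t < s \<longrightarrow> HF s - HF t = HF s * (1 + fps_exp t2)"
proof -
  have ni: "of_int k1 * s + d1 \<notin> \<int>" "of_int k3 * s + d3 \<notin> \<int>"
    using g12[of s] g23[of s] assms by (metis Ints_of_int)+
  obtain e where e: "e > 0" "\<forall>t. s - e < t \<and> t < s \<longrightarrow>
     \<lfloor>of_int k2 * t + d2\<rfloor> = n - 1 \<and> \<lfloor>of_int k1 * t + d1\<rfloor> = \<lfloor>of_int k1 * s + d1\<rfloor> \<and> \<lfloor>of_int k3 * t + d3\<rfloor> = \<lfloor>of_int k3 * s + d3\<rfloor>"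
    using jump_floor3[of "of_int k2" "of_int k1" "of_int k3" s d2 n d1 d3] pos1 pos2 pos3 assms ni by auto
  have "HF s - HF t = HF s * (1 + fps_exp t2)" if "s - e < t \<and> t < s" for t
  proof -
    have fl: "\<lfloor>of_int k2 * t + d2\<rfloor> = n - 1" "\<lfloor>of_int k1 * t + d1\<rfloor> = \<lfloor>of_int k1 * s + d1\<rfloor>"
      "\<lfloor>of_int k3 * t + d3\<rfloor> = \<lfloor>of_int k3 * s + d3\<rfloor>" using e(2) that by auto
    have fs: "\<lfloor>of_int k2 * s + d2\<rfloor> = n" using assms by simp
    have "HF t = - (HF s * fps_exp t2)"
      unfolding HF_def fl fs psi_prev by (simp only: ac_simps mult_minus_left mult_minus_right)
    then show ?thesis by (simp add: algebra_simps)
  qed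
  with e(1) show ?thesis by blast
qed

lemma jump3:
  assumes "of_int k3 * s + d3 = of_int n"
  shows "\<exists>e>0. \<forall>t. s - e < t \<and> t < s \<longrightarrow> HF s - HF t = HF s * (1 + fps_exp t3)"
proof -
  have ni: "of_int k1 * s + d1 \<notin> \<int>" "of_int k2 * s + d2 \<notin> \<int>"
    using g13[of s] g23[of s] assms by (metis Ints_of_int)+
  obtain e where e: "e > 0" "\<forall>t. s - e < t \<and> t < s \<longrightarrow>
     \<lfloor>of_int k3 * t + d3\<rfloor> = n - 1 \<and> \<lfloor>of_int k1 * t + d1\<rfloor> = \<lfloor>of_int k1 * s + d1\<rfloor> \<and> \<lfloor>of_int k2 * t + d2\<rfloor> = \<lfloor>of_int k2 * s + d2\<rfloor>"
    using jump_floor3[of "of_int k3" "of_int k1" "of_int k2" s d3 n d1 d2] pos1 pos2 pos3 assms ni by auto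
  have "HF s - HF t = HF s * (1 + fps_exp t3)" if "s - e < t \<and> t < s" for t
  proof -
    have fl: "\<lfloor>of_int k3 * t + d3\<rfloor> = n - 1" "\<lfloor>of_int k1 * t + d1\<rfloor> = \<lfloor>of_int k1 * s + d1\<rfloor>"
      "\<lfloor>of_int k2 * t + d2\<rfloor> = \<lfloor>of_int k2 * s + d2\<rfloor>" using e(2) that by auto
    have fs: "\<lfloor>of_int k3 * s + d3\<rfloor> = n" using assms by simp
    have "HF t = - (HF s * fps_exp t3)"
      unfolding HF_def fl fs psi_prev by (simp only: ac_simps mult_minus_left mult_minus_right)
    then show ?thesis by (simp add: algebra_simps)
  qed
  with e(1) show ?thesis by blast
qed

end

context tri
begin

theorem tri_main:
  fixes s0 :: real
  defines "m1 \<equiv> \<lfloor>of_int k1 * s0 + d1\<rfloor> + 1" and "m2 \<equiv> \<lfloor>of_int k2 * s0 + d2\<rfloor> + 1"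
    and "m3 \<equiv> \<lfloor>of_int k3 * s0 + d3\<rfloor> + 1"
  shows "(1 + fps_exp t1) * (\<Sum>n\<in>{m1..<m1+k1}. fps_const ((-1) powi n) *
            gg (of_int k2 * ((of_int n - d1) / of_int k1) + d2) t2 * gg (of_int k3 * ((of_int n - d1) / of_int k1) + d3) t3)
       + (1 + fps_exp t2) * (\<Sum>n\<in>{m2..<m2+k2}. fps_const ((-1) powi n) *
            gg (of_int k1 * ((of_int n - d2) / of_int k2) + d1) t1 * gg (of_int k3 * ((of_int n - d2) / of_int k2) + d3) t3)
       + (1 + fps_exp t3) * (\<Sum>n\<in>{m3..<m3+k3}. fps_const ((-1) powi n) *
            gg (of_int k1 * ((of_int n - d3) / of_int k3) + d1) t1 * gg (of_int k2 * ((of_int n - d3) / of_int k3) + d2) t2) = 0"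
proof -
  define J1 where "J1 = {s. s0 < s \<and> s \<le> s0 + 1 \<and> of_int k1 * s + d1 \<in> \<int>}"
  define J2 where "J2 = {s. s0 < s \<and> s \<le> s0 + 1 \<and> of_int k2 * s + d2 \<in> \<int>}"
  define J3 where "J3 = {s. s0 < s \<and> s \<le> s0 + 1 \<and> of_int k3 * s + d3 \<in> \<int>}"
  define \<sigma>1 where "\<sigma>1 n = (of_int n - d1) / of_int k1" for n :: int
  define \<sigma>2 where "\<sigma>2 n = (of_int n - d2) / of_int k2" for n :: int
  define \<sigma>3 where "\<sigma>3 n = (of_int n - d3) / of_int k3" for n :: int
  have J1eq: "J1 = \<sigma>1 ` {m1..<m1+k1}" unfolding J1_def \<sigma>1_def m1_def using crossing_set[OF pos1] by simp
  have J2eq: "J2 = \<sigma>2 ` {m2..<m2+k2}" unfolding J2_def \<sigma>2_def m2_def using crossing_set[OF pos2] by simp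
  have J3eq: "J3 = \<sigma>3 ` {m3..<m3+k3}" unfolding J3_def \<sigma>3_def m3_def using crossing_set[OF pos3] by simp
  have inj1: "inj_on \<sigma>1 {m1..<m1+k1}" unfolding \<sigma>1_def using pos1 by (intro crossing_inj) simp
  have inj2: "inj_on \<sigma>2 {m2..<m2+k2}" unfolding \<sigma>2_def using pos2 by (intro crossing_inj) simp
  have inj3: "inj_on \<sigma>3 {m3..<m3+k3}" unfolding \<sigma>3_def using pos3 by (intro crossing_inj) simp
  have fin1: "finite J1" and fin2: "finite J2" and fin3: "finite J3" using J1eq J2eq J3eq by auto
  define J where "J = J1 \<union> J2 \<union> J3"
  define Dj where "Dj s = HF s * (if of_int k1 * s + d1 \<in> \<int> then 1 + fps_exp t1
      else if of_int k2 * s + d2 \<in> \<int> then 1 + fps_exp t2 else 1 + fps_exp t3)" for s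
  have tel: "HF (s0 + 1) - HF s0 = (\<Sum>s\<in>J. Dj s)"
  proof (rule telescope)
    show "finite J" using fin1 fin2 fin3 J_def by simp
    show "J \<subseteq> {s0<..s0 + 1}" unfolding J_def J1_def J2_def J3_def by auto
    show "s0 \<le> s0 + 1" by simp
    show "HF l = HF u" if "s0 \<le> l" "l \<le> u" "u \<le> s0 + 1" "\<forall>s\<in>J. \<not> (l < s \<and> s \<le> u)" for l u
    proof (rule HF_const)
      show "l \<le> u" by fact
      fix s assume s: "l < s" "s \<le> u"
      then have "s \<notin> J" using that(4) by blast
      moreover have "s0 < s" "s \<le> s0 + 1" using s that by auto
      ultimately show "of_int k1 * s + d1 \<notin> \<int> \<and> of_int k2 * s + d2 \<notin> \<int> \<and> of_int k3 * s + d3 \<notin> \<int>"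
        unfolding J_def J1_def J2_def J3_def by auto
    qed
    show "\<exists>e>0. \<forall>t. s - e < t \<and> t < s \<longrightarrow> HF s - HF t = Dj s" if "s \<in> J" for s
    proof (cases "of_int k1 * s + d1 \<in> \<int>")
      case True
      then obtain n where "of_int k1 * s + d1 = of_int n" by (metis Ints_cases)
      then show ?thesis using jump1 True by (simp add: Dj_def)
    next
      case F1: False
      show ?thesis
      proof (cases "of_int k2 * s + d2 \<in> \<int>")
        case True
        then obtain n where "of_int k2 * s + d2 = of_int n" by (metis Ints_cases)
        then show ?thesis using jump2 True F1 by (simp add: Dj_def)
      next
        case False
        then have "of_int k3 * s + d3 \<in> \<int>" using that F1 unfolding J_def J1_def J2_def J3_def by auto
        then obtain n where "of_int k3 * s + d3 = of_int n" by (metis Ints_cases)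
        then show ?thesis using jump3 False F1 by (simp add: Dj_def)
      qed
    qed
  qed
  have zero: "(\<Sum>s\<in>J. Dj s) = 0" using tel HF_period[of s0] by simp
  have d12: "J1 \<inter> J2 = {}" unfolding J1_def J2_def using g12 by auto
  have d3: "(J1 \<union> J2) \<inter> J3 = {}" unfolding J1_def J2_def J3_def using g13 g23 by auto
  have split: "(\<Sum>s\<in>J. Dj s) = (\<Sum>s\<in>J1. Dj s) + (\<Sum>s\<in>J2. Dj s) + (\<Sum>s\<in>J3. Dj s)"
    unfolding J_def using fin1 fin2 fin3 d12 d3 by (simp add: sum.union_disjoint)
  have S1: "(\<Sum>s\<in>J1. Dj s) = (1 + fps_exp t1) * (\<Sum>n\<in>{m1..<m1+k1}. fps_const ((-1) powi n) *
            gg (of_int k2 * ((of_int n - d1) / of_int k1) + d2) t2 * gg (of_int k3 * ((of_int n - d1) / of_int k1) + d3) t3)"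
  proof -
    have "(\<Sum>s\<in>J1. Dj s) = (\<Sum>s\<in>J1. HF s * (1 + fps_exp t1))"
      by (rule sum.cong) (auto simp: Dj_def J1_def)
    also have "\<dots> = (\<Sum>n\<in>{m1..<m1+k1}. HF (\<sigma>1 n) * (1 + fps_exp t1))"
      unfolding J1eq using inj1 by (simp add: sum.reindex)
    also have "\<dots> = (\<Sum>n\<in>{m1..<m1+k1}. (1 + fps_exp t1) * (fps_const ((-1) powi n) *
            gg (of_int k2 * ((of_int n - d1) / of_int k1) + d2) t2 * gg (of_int k3 * ((of_int n - d1) / of_int k1) + d3) t3))"
    proof (rule sum.cong)
      fix n assume "n \<in> {m1..<m1+k1}"
      have "of_int k1 * \<sigma>1 n + d1 = of_int n" unfolding \<sigma>1_def using pos1 by (simp add: field_simps)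
      then show "HF (\<sigma>1 n) * (1 + fps_exp t1) = (1 + fps_exp t1) * (fps_const ((-1) powi n) *
            gg (of_int k2 * ((of_int n - d1) / of_int k1) + d2) t2 * gg (of_int k3 * ((of_int n - d1) / of_int k1) + d3) t3)"
        unfolding HF_gg by (simp add: gg_int \<sigma>1_def mult_ac)
    qed simp
    finally show ?thesis by (simp add: sum_distrib_left)
  qed
  have S2: "(\<Sum>s\<in>J2. Dj s) = (1 + fps_exp t2) * (\<Sum>n\<in>{m2..<m2+k2}. fps_const ((-1) powi n) *
            gg (of_int k1 * ((of_int n - d2) / of_int k2) + d1) t1 * gg (of_int k3 * ((of_int n - d2) / of_int k2) + d3) t3)"
  proof -
    have "(\<Sum>s\<in>J2. Dj s) = (\<Sum>s\<in>J2. HF s * (1 + fps_exp t2))"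
    proof (rule sum.cong)
      fix s assume "s \<in> J2"
      then have "of_int k2 * s + d2 \<in> \<int>" "of_int k1 * s + d1 \<notin> \<int>" using g12[of s] unfolding J2_def by auto
      then show "Dj s = HF s * (1 + fps_exp t2)" by (simp add: Dj_def)
    qed simp
    also have "\<dots> = (\<Sum>n\<in>{m2..<m2+k2}. HF (\<sigma>2 n) * (1 + fps_exp t2))"
      unfolding J2eq using inj2 by (simp add: sum.reindex)
    also have "\<dots> = (\<Sum>n\<in>{m2..<m2+k2}. (1 + fps_exp t2) * (fps_const ((-1) powi n) *
            gg (of_int k1 * ((of_int n - d2) / of_int k2) + d1) t1 * gg (of_int k3 * ((of_int n - d2) / of_int k2) + d3) t3))"
    proof (rule sum.cong)
      fix n assume "n \<in> {m2..<m2+k2}"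
      have "of_int k2 * \<sigma>2 n + d2 = of_int n" unfolding \<sigma>2_def using pos2 by (simp add: field_simps)
      then show "HF (\<sigma>2 n) * (1 + fps_exp t2) = (1 + fps_exp t2) * (fps_const ((-1) powi n) *
            gg (of_int k1 * ((of_int n - d2) / of_int k2) + d1) t1 * gg (of_int k3 * ((of_int n - d2) / of_int k2) + d3) t3)"
        unfolding HF_gg by (simp add: gg_int \<sigma>2_def mult_ac)
    qed simp
    finally show ?thesis by (simp add: sum_distrib_left)
  qed
  have S3: "(\<Sum>s\<in>J3. Dj s) = (1 + fps_exp t3) * (\<Sum>n\<in>{m3..<m3+k3}. fps_const ((-1) powi n) *
            gg (of_int k1 * ((of_int n - d3) / of_int k3) + d1) t1 * gg (of_int k2 * ((of_int n - d3) / of_int k3) + d2) t2)"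
  proof -
    have "(\<Sum>s\<in>J3. Dj s) = (\<Sum>s\<in>J3. HF s * (1 + fps_exp t3))"
    proof (rule sum.cong)
      fix s assume "s \<in> J3"
      then have "of_int k3 * s + d3 \<in> \<int>" "of_int k1 * s + d1 \<notin> \<int>" "of_int k2 * s + d2 \<notin> \<int>"
        using g13[of s] g23[of s] unfolding J3_def by auto
      then show "Dj s = HF s * (1 + fps_exp t3)" by (simp add: Dj_def)
    qed simp
    also have "\<dots> = (\<Sum>n\<in>{m3..<m3+k3}. HF (\<sigma>3 n) * (1 + fps_exp t3))"
      unfolding J3eq using inj3 by (simp add: sum.reindex)
    also have "\<dots> = (\<Sum>n\<in>{m3..<m3+k3}. (1 + fps_exp t3) * (fps_const ((-1) powi n) *
            gg (of_int k1 * ((of_int n - d3) / of_int k3) + d1) t1 * gg (of_int k2 * ((of_int n - d3) / of_int k3) + d2) t2))"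
    proof (rule sum.cong)
      fix n assume "n \<in> {m3..<m3+k3}"
      have "of_int k3 * \<sigma>3 n + d3 = of_int n" unfolding \<sigma>3_def using pos3 by (simp add: field_simps)
      then show "HF (\<sigma>3 n) * (1 + fps_exp t3) = (1 + fps_exp t3) * (fps_const ((-1) powi n) *
            gg (of_int k1 * ((of_int n - d3) / of_int k3) + d1) t1 * gg (of_int k2 * ((of_int n - d3) / of_int k3) + d2) t2)"
        unfolding HF_gg by (simp add: gg_int \<sigma>3_def mult_ac)
    qed simp
    finally show ?thesis by (simp add: sum_distrib_left)
  qed
  show ?thesis using zero split S1 S2 S3 by simp
qed

end

lemma window_EG:
  fixes u1 u2 :: "int \<Rightarrow> real" and P q1 q2 k :: int
  assumes "P \<ge> 0" "even (P + q1 + q2)" "\<And>n. u1 (n + P) = u1 n + of_int q1" "\<And>n. u2 (n + P) = u2 n + of_int q2"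
  shows "(\<Sum>n\<in>{k..<k+P}. fps_const ((-1) powi n) * EGs s1 (u1 n) * EGs s2 (u2 n))
       = (\<Sum>n\<in>{0..<P}. fps_const ((-1) powi n) * EGs s1 (u1 n) * EGs s2 (u2 n))"
proof (rule sum_window[OF assms(1)])
  fix n
  have s1: "(-1::real) powi (n + P) * (-1) powi q1 * (-1) powi q2 = (-1) powi (n + P + q1 + q2)"
    by (simp add: power_int_add)
  have s2: "(-1::real) powi (n + P + q1 + q2) = (-1) powi n"
    using assms(2) by (auto simp: m1powi)
  have "fps_const ((-1) powi (n + P)) * EGs s1 (u1 (n + P)) * EGs s2 (u2 (n + P))
      = fps_const ((-1) powi (n + P) * (-1) powi q1 * (-1) powi q2) * EGs s1 (u1 n) * EGs s2 (u2 n)"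
    unfolding assms(3,4) EG_shift fps_const_mult[symmetric] by (simp only: ac_simps)
  then show "fps_const ((-1) powi (n + P)) * EGs s1 (u1 (n + P)) * EGs s2 (u2 (n + P))
      = fps_const ((-1) powi n) * EGs s1 (u1 n) * EGs s2 (u2 n)"
    unfolding s1 s2 .
qed

lemma sum_neg_interval:
  fixes h :: "int \<Rightarrow> 'v::comm_monoid_add" and m P :: int
  shows "(\<Sum>n\<in>{m..<m+P}. h n) = (\<Sum>\<mu>\<in>{-m-P+1..<-m-P+1+P}. h (- \<mu>))"
proof -
  have img: "uminus ` {m..<m+P} = {-m-P+1..<-m-P+1+P}"
  proof (intro equalityI subsetI)
    fix x assume "x \<in> uminus ` {m..<m+P}"
    then show "x \<in> {-m-P+1..<-m-P+1+P}" by auto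
  next
    fix x assume "x \<in> {-m-P+1..<-m-P+1+P}"
    then have "-x \<in> {m..<m+P}" by auto
    then show "x \<in> uminus ` {m..<m+P}" by (intro image_eqI[where x = "-x"]) auto
  qed
  have "(\<Sum>\<mu>\<in>uminus ` {m..<m+P}. h (- \<mu>)) = (\<Sum>n\<in>{m..<m+P}. h (- (- n)))"
    by (rule sum.reindex_cong[where l = uminus]) (auto simp: inj_on_def)
  then show ?thesis unfolding img by simp
qed

lemma DD_mul': "DD t * (1 + fps_exp t) = 1"
  using DD_mul[of t] by (simp add: mult.commute)

lemma four_DD:
  "4 * DD s1 * DD s2 * (fps_const e * gg w1 s1 * gg w2 s2) = fps_const e * EGs s1 w1 * EGs s2 w2"
  unfolding EG_eq by (simp add: algebra_simps)

lemma int_comb: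
  fixes u v :: real and p q :: int
  assumes "u \<in> \<int>" "v \<in> \<int>"
  shows "of_int p * u - of_int q * v \<in> \<int>"
  using assms by (intro Ints_diff Ints_mult) auto

lemma fps_identity:
  fixes a b c :: int and x y z \<alpha> \<beta> \<gamma> :: real
  assumes pa: "a > 0" and pb: "b > 0" and pc: "c > 0" and ev: "even (a + b + c)"
    and bal: "of_int a * \<alpha> + of_int b * \<beta> + of_int c * \<gamma> = 0"
    and gen1: "of_int c * x + of_int a * z \<notin> \<int>"
    and gen2: "of_int b * x - of_int a * y \<notin> \<int>"
    and gen3: "of_int c * y + of_int b * z \<notin> \<int>"
  shows "(\<Sum>\<mu>\<in>{0..<c}. fps_const ((-1) powi \<mu>) * EGs \<alpha> (of_int a * (of_int \<mu> + z) / of_int c + x)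
            * EGs \<beta> (of_int b * (of_int \<mu> + z) / of_int c + y))
       = (\<Sum>\<mu>\<in>{0..<b}. fps_const ((-1) powi \<mu>) * EGs (-\<gamma>) (of_int c * (of_int \<mu> + y) / of_int b + z)
            * EGs \<alpha> (of_int (-a) * (of_int \<mu> + y) / of_int b + x))
       - (\<Sum>\<mu>\<in>{0..<a}. fps_const ((-1) powi \<mu>) * EGs (-\<gamma>) (of_int c * (of_int \<mu> + x) / of_int a + z)
            * EGs (-\<beta>) (of_int b * (of_int \<mu> + x) / of_int a + - y))"
proof -
  have ra: "(of_int a :: real) \<noteq> 0" and rb: "(of_int b :: real) \<noteq> 0" and rc: "(of_int c :: real) \<noteq> 0"
    using pa pb pc by auto
  have G12: "of_int b * s + y \<notin> \<int>" if "of_int a * s + x \<in> \<int>" for s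
  proof
    assume "of_int b * s + y \<in> \<int>"
    then have "of_int b * (of_int a * s + x) - of_int a * (of_int b * s + y) \<in> \<int>"
      using that by (intro int_comb)
    moreover have "of_int b * (of_int a * s + x) - of_int a * (of_int b * s + y) = of_int b * x - of_int a * y"
      by (simp add: algebra_simps)
    ultimately show False using gen2 by simp
  qed
  have G13: "of_int c * s + - z \<notin> \<int>" if "of_int a * s + x \<in> \<int>" for s
  proof
    assume "of_int c * s + - z \<in> \<int>"
    then have "of_int c * (of_int a * s + x) - of_int a * (of_int c * s + - z) \<in> \<int>"
      using that by (intro int_comb)
    moreover have "of_int c * (of_int a * s + x) - of_int a * (of_int c * s + - z) = of_int c * x + of_int a * z"
      by (simp add: algebra_simps)
    ultimately show False using gen1 by simp
  qed
  have G23: "of_int c * s + - z \<notin> \<int>" if "of_int b * s + y \<in> \<int>" for s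
  proof
    assume "of_int c * s + - z \<in> \<int>"
    then have "of_int c * (of_int b * s + y) - of_int b * (of_int c * s + - z) \<in> \<int>"
      using that by (intro int_comb)
    moreover have "of_int c * (of_int b * s + y) - of_int b * (of_int c * s + - z) = of_int c * y + of_int b * z"
      by (simp add: algebra_simps)
    ultimately show False using gen3 by simp
  qed
  interpret T: tri a b c x y "- z" \<alpha> \<beta> \<gamma>
    using pa pb pc ev bal G12 G13 G23 by unfold_locales auto
  define m1 where "m1 = \<lfloor>of_int a * 0 + x\<rfloor> + 1"
  define m2 where "m2 = \<lfloor>of_int b * 0 + y\<rfloor> + 1"
  define m3 where "m3 = \<lfloor>of_int c * 0 + - z\<rfloor> + 1"
  define T1 where "T1 = (\<Sum>n\<in>{m1..<m1+a}. fps_const ((-1) powi n) *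
            gg (of_int b * ((of_int n - x) / of_int a) + y) \<beta> * gg (of_int c * ((of_int n - x) / of_int a) + - z) \<gamma>)"
  define T2 where "T2 = (\<Sum>n\<in>{m2..<m2+b}. fps_const ((-1) powi n) *
            gg (of_int a * ((of_int n - y) / of_int b) + x) \<alpha> * gg (of_int c * ((of_int n - y) / of_int b) + - z) \<gamma>)"
  define T3 where "T3 = (\<Sum>n\<in>{m3..<m3+c}. fps_const ((-1) powi n) *
            gg (of_int a * ((of_int n - - z) / of_int c) + x) \<alpha> * gg (of_int b * ((of_int n - - z) / of_int c) + y) \<beta>)"
  have main: "(1 + fps_exp \<alpha>) * T1 + (1 + fps_exp \<beta>) * T2 + (1 + fps_exp \<gamma>) * T3 = 0"
    using T.tri_main[of 0] unfolding T1_def T2_def T3_def m1_def m2_def m3_def .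
  define L where "L = (\<Sum>\<mu>\<in>{0..<c}. fps_const ((-1) powi \<mu>) * EGs \<alpha> (of_int a * (of_int \<mu> + z) / of_int c + x)
            * EGs \<beta> (of_int b * (of_int \<mu> + z) / of_int c + y))"
  define R1 where "R1 = (\<Sum>\<mu>\<in>{0..<b}. fps_const ((-1) powi \<mu>) * EGs (-\<gamma>) (of_int c * (of_int \<mu> + y) / of_int b + z)
            * EGs \<alpha> (of_int (-a) * (of_int \<mu> + y) / of_int b + x))"
  define R2 where "R2 = (\<Sum>\<mu>\<in>{0..<a}. fps_const ((-1) powi \<mu>) * EGs (-\<gamma>) (of_int c * (of_int \<mu> + x) / of_int a + z)
            * EGs (-\<beta>) (of_int b * (of_int \<mu> + x) / of_int a + - y))"
  define DDD where "DDD = 4 * DD \<alpha> * DD \<beta> * DD \<gamma>"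
  have E3: "DDD * ((1 + fps_exp \<gamma>) * T3) = L"
  proof -
    have "DDD * ((1 + fps_exp \<gamma>) * T3) = (DD \<gamma> * (1 + fps_exp \<gamma>)) * (4 * DD \<alpha> * DD \<beta> * T3)"
      unfolding DDD_def by (simp only: ac_simps)
    also have "\<dots> = 4 * DD \<alpha> * DD \<beta> * T3" by (simp add: DD_mul')
    also have "\<dots> = (\<Sum>n\<in>{m3..<m3+c}. fps_const ((-1) powi n) * EGs \<alpha> (of_int a * (of_int n + z) / of_int c + x)
            * EGs \<beta> (of_int b * (of_int n + z) / of_int c + y))"
      unfolding T3_def sum_distrib_left four_DD by (simp add: times_divide_eq_right)
    also have "\<dots> = L" unfolding L_def
    proof (rule window_EG)
      show "0 \<le> c" using pc by simp
      show "even (c + a + b)" using ev by (simp add: ac_simps)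
      show "of_int a * (of_int (n + c) + z) / of_int c + x = of_int a * (of_int n + z) / of_int c + x + of_int a" for n
        using rc by (simp add: field_simps)
      show "of_int b * (of_int (n + c) + z) / of_int c + y = of_int b * (of_int n + z) / of_int c + y + of_int b" for n
        using rc by (simp add: field_simps)
    qed
    finally show ?thesis .
  qed
  have E1: "DDD * ((1 + fps_exp \<alpha>) * T1) = R2"
  proof -
    have "DDD * ((1 + fps_exp \<alpha>) * T1) = (DD \<alpha> * (1 + fps_exp \<alpha>)) * (4 * DD \<beta> * DD \<gamma> * T1)"
      unfolding DDD_def by (simp only: ac_simps)
    also have "\<dots> = 4 * DD \<beta> * DD \<gamma> * T1" by (simp add: DD_mul')
    also have "\<dots> = (\<Sum>n\<in>{m1..<m1+a}. fps_const ((-1) powi n) * EGs \<beta> (of_int b * ((of_int n - x) / of_int a) + y)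
            * EGs \<gamma> (of_int c * ((of_int n - x) / of_int a) + - z))"
      unfolding T1_def sum_distrib_left four_DD ..
    also have "\<dots> = (\<Sum>n\<in>{m1..<m1+a}. fps_const ((-1) powi n) * EGs (-\<beta>) (- (of_int b * ((of_int n - x) / of_int a) + y))
            * EGs (-\<gamma>) (- (of_int c * ((of_int n - x) / of_int a) + - z)))"
    proof (rule sum.cong)
      fix n assume "n \<in> {m1..<m1+a}"
      have "of_int a * ((of_int n - x) / of_int a) + x = of_int n" using ra by simp
      then have i: "of_int a * ((of_int n - x) / of_int a) + x \<in> \<int>" by simp
      show "fps_const ((-1) powi n) * EGs \<beta> (of_int b * ((of_int n - x) / of_int a) + y)
            * EGs \<gamma> (of_int c * ((of_int n - x) / of_int a) + - z) =
            fps_const ((-1) powi n) * EGs (-\<beta>) (- (of_int b * ((of_int n - x) / of_int a) + y))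
            * EGs (-\<gamma>) (- (of_int c * ((of_int n - x) / of_int a) + - z))"
        using EG_refl[OF G12[OF i], of \<beta>] EG_refl[OF G13[OF i], of \<gamma>] by simp
    qed simp
    also have "\<dots> = (\<Sum>\<mu>\<in>{-m1-a+1..<-m1-a+1+a}. fps_const ((-1) powi (-\<mu>)) * EGs (-\<beta>) (- (of_int b * ((of_int (-\<mu>) - x) / of_int a) + y))
            * EGs (-\<gamma>) (- (of_int c * ((of_int (-\<mu>) - x) / of_int a) + - z)))"
      by (rule sum_neg_interval)
    also have "\<dots> = (\<Sum>\<mu>\<in>{-m1-a+1..<-m1-a+1+a}. fps_const ((-1) powi \<mu>) * EGs (-\<gamma>) (of_int c * (of_int \<mu> + x) / of_int a + z)
            * EGs (-\<beta>) (of_int b * (of_int \<mu> + x) / of_int a + - y))"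
    proof (rule sum.cong)
      fix \<mu> :: int
      have 1: "- (of_int b * ((of_int (-\<mu>) - x) / of_int a) + y) = of_int b * (of_int \<mu> + x) / of_int a + - y"
        using ra by (simp add: field_simps)
      have 2: "- (of_int c * ((of_int (-\<mu>) - x) / of_int a) + - z) = of_int c * (of_int \<mu> + x) / of_int a + z"
        using ra by (simp add: field_simps)
      show "fps_const ((-1) powi (-\<mu>)) * EGs (-\<beta>) (- (of_int b * ((of_int (-\<mu>) - x) / of_int a) + y))
            * EGs (-\<gamma>) (- (of_int c * ((of_int (-\<mu>) - x) / of_int a) + - z)) =
            fps_const ((-1) powi \<mu>) * EGs (-\<gamma>) (of_int c * (of_int \<mu> + x) / of_int a + z)
            * EGs (-\<beta>) (of_int b * (of_int \<mu> + x) / of_int a + - y)"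
        unfolding 1 2 power_int_minus_one_minus by (simp only: ac_simps)
    qed simp
    also have "\<dots> = R2" unfolding R2_def
    proof (rule window_EG)
      show "0 \<le> a" using pa by simp
      show "even (a + c + b)" using ev by (simp add: ac_simps)
      show "of_int c * (of_int (n + a) + x) / of_int a + z = of_int c * (of_int n + x) / of_int a + z + of_int c" for n
        using ra by (simp add: field_simps)
      show "of_int b * (of_int (n + a) + x) / of_int a + - y = of_int b * (of_int n + x) / of_int a + - y + of_int b" for n
        using ra by (simp add: field_simps)
    qed
    finally show ?thesis .
  qed
  have E2: "DDD * ((1 + fps_exp \<beta>) * T2) = - R1"
  proof -
    have "DDD * ((1 + fps_exp \<beta>) * T2) = (DD \<beta> * (1 + fps_exp \<beta>)) * (4 * DD \<alpha> * DD \<gamma> * T2)"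
      unfolding DDD_def by (simp only: ac_simps)
    also have "\<dots> = 4 * DD \<alpha> * DD \<gamma> * T2" by (simp add: DD_mul')
    also have "\<dots> = (\<Sum>n\<in>{m2..<m2+b}. fps_const ((-1) powi n) * EGs \<alpha> (of_int a * ((of_int n - y) / of_int b) + x)
            * EGs \<gamma> (of_int c * ((of_int n - y) / of_int b) + - z))"
      unfolding T2_def sum_distrib_left four_DD ..
    also have "\<dots> = - (\<Sum>n\<in>{m2..<m2+b}. fps_const ((-1) powi n) * EGs (-\<gamma>) (- (of_int c * ((of_int n - y) / of_int b) + - z))
            * EGs \<alpha> (of_int a * ((of_int n - y) / of_int b) + x))"
      unfolding sum_negf[symmetric]
    proof (rule sum.cong)
      fix n assume "n \<in> {m2..<m2+b}"
      have "of_int b * ((of_int n - y) / of_int b) + y = of_int n" using rb by simp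
      then have i: "of_int b * ((of_int n - y) / of_int b) + y \<in> \<int>" by simp
      show "fps_const ((-1) powi n) * EGs \<alpha> (of_int a * ((of_int n - y) / of_int b) + x)
            * EGs \<gamma> (of_int c * ((of_int n - y) / of_int b) + - z) =
            - (fps_const ((-1) powi n) * EGs (-\<gamma>) (- (of_int c * ((of_int n - y) / of_int b) + - z))
            * EGs \<alpha> (of_int a * ((of_int n - y) / of_int b) + x))"
        using EG_refl[OF G23[OF i], of \<gamma>] by (simp add: ac_simps)
    qed simp
    also have "(\<Sum>n\<in>{m2..<m2+b}. fps_const ((-1) powi n) * EGs (-\<gamma>) (- (of_int c * ((of_int n - y) / of_int b) + - z))
            * EGs \<alpha> (of_int a * ((of_int n - y) / of_int b) + x))
       = (\<Sum>\<mu>\<in>{-m2-b+1..<-m2-b+1+b}. fps_const ((-1) powi (-\<mu>)) * EGs (-\<gamma>) (- (of_int c * ((of_int (-\<mu>) - y) / of_int b) + - z))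
            * EGs \<alpha> (of_int a * ((of_int (-\<mu>) - y) / of_int b) + x))"
      by (rule sum_neg_interval)
    also have "\<dots> = (\<Sum>\<mu>\<in>{-m2-b+1..<-m2-b+1+b}. fps_const ((-1) powi \<mu>) * EGs (-\<gamma>) (of_int c * (of_int \<mu> + y) / of_int b + z)
            * EGs \<alpha> (of_int (-a) * (of_int \<mu> + y) / of_int b + x))"
    proof (rule sum.cong)
      fix \<mu> :: int
      have 1: "- (of_int c * ((of_int (-\<mu>) - y) / of_int b) + - z) = of_int c * (of_int \<mu> + y) / of_int b + z"
        using rb by (simp add: field_simps)
      have 2: "of_int a * ((of_int (-\<mu>) - y) / of_int b) + x = of_int (-a) * (of_int \<mu> + y) / of_int b + x"
        using rb by (simp add: field_simps)
      show "fps_const ((-1) powi (-\<mu>)) * EGs (-\<gamma>) (- (of_int c * ((of_int (-\<mu>) - y) / of_int b) + - z))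
            * EGs \<alpha> (of_int a * ((of_int (-\<mu>) - y) / of_int b) + x) =
            fps_const ((-1) powi \<mu>) * EGs (-\<gamma>) (of_int c * (of_int \<mu> + y) / of_int b + z)
            * EGs \<alpha> (of_int (-a) * (of_int \<mu> + y) / of_int b + x)"
        unfolding 1 2 power_int_minus_one_minus ..
    qed simp
    also have "\<dots> = R1" unfolding R1_def
    proof (rule window_EG)
      show "0 \<le> b" using pb by simp
      show "even (b + c + (-a))" using ev by presburger
      show "of_int c * (of_int (n + b) + y) / of_int b + z = of_int c * (of_int n + y) / of_int b + z + of_int c" for n
        using rb by (simp add: field_simps)
      show "of_int (-a) * (of_int (n + b) + y) / of_int b + x = of_int (-a) * (of_int n + y) / of_int b + x + of_int (-a)" for n
        using rb by (simp add: field_simps)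
    qed
    finally show ?thesis .
  qed
  have "DDD * ((1 + fps_exp \<alpha>) * T1 + (1 + fps_exp \<beta>) * T2 + (1 + fps_exp \<gamma>) * T3) = 0"
    using main by simp
  then have "R2 + - R1 + L = 0" unfolding distrib_left E1 E2 E3 .
  then have "L = R1 - R2" by (simp add: algebra_simps)
  then show ?thesis unfolding L_def R1_def R2_def .
qed

lemma coeff_pair:
  "fps_nth (\<Sum>\<mu>\<in>M. fps_const ((-1) powi \<mu>) * EGs s1 (u \<mu>) * EGs s2 (v \<mu>)) n =
   (\<Sum>i=0..n. (\<Sum>\<mu>\<in>M. (-1) powi \<mu> * euler_fun i (u \<mu>) * euler_fun (n - i) (v \<mu>))
      * (s1 ^ i * s2 ^ (n - i) / (fact i * fact (n - i))))"
proof -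
  have "fps_nth (\<Sum>\<mu>\<in>M. fps_const ((-1) powi \<mu>) * EGs s1 (u \<mu>) * EGs s2 (v \<mu>)) n =
     (\<Sum>\<mu>\<in>M. \<Sum>i=0..n. (-1) powi \<mu> * ((euler_fun i (u \<mu>) * s1 ^ i / fact i) * (euler_fun (n - i) (v \<mu>) * s2 ^ (n - i) / fact (n - i))))"
    unfolding fps_sum_nth mult.assoc fps_mult_left_const_nth
    unfolding fps_mult_nth EGs_def fps_nth_Abs_fps sum_distrib_left ..
  also have "\<dots> = (\<Sum>i=0..n. \<Sum>\<mu>\<in>M. (-1) powi \<mu> * ((euler_fun i (u \<mu>) * s1 ^ i / fact i) * (euler_fun (n - i) (v \<mu>) * s2 ^ (n - i) / fact (n - i))))"
    by (rule sum.swap)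
  also have "\<dots> = (\<Sum>i=0..n. (\<Sum>\<mu>\<in>M. (-1) powi \<mu> * euler_fun i (u \<mu>) * euler_fun (n - i) (v \<mu>))
      * (s1 ^ i * s2 ^ (n - i) / (fact i * fact (n - i))))"
    by (rule sum.cong[OF refl], subst sum_distrib_right, rule sum.cong[OF refl]) (simp add: field_simps)
  finally show ?thesis .
qed

lemma S_sum:
  "S (Suc i) (Suc j) a b c x y z = (\<Sum>\<mu>\<in>{0..<c}. (-1) powi \<mu> *
      euler_fun i (of_int a * (of_int \<mu> + z) / of_int c + x) * euler_fun j (of_int b * (of_int \<mu> + z) / of_int c + y))"
  by (simp add: S_def)

lemma coeff_11: "coeff ([:1, 1:] ^ i) r = (of_nat (i choose r) :: real)"
proof (cases "r \<le> i")
  case True then show ?thesis using coeff_linear_poly_power[OF True, of 1 1] by simp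
next
  case False
  have "degree ([:1, 1:] ^ i :: real poly) \<le> i" by (metis degree_linear_power order_refl) 
  then have "coeff ([:1, 1:] ^ i :: real poly) r = 0" using False by (intro coeff_eq_0) simp
  then show ?thesis using False by simp
qed

lemma coeff_identity:
  fixes a b c :: int and x y z :: real and r n :: nat
  assumes pa: "a > 0" and pb: "b > 0" and pc: "c > 0" and ev: "even (a + b + c)"
    and gen1: "of_int c * x + of_int a * z \<notin> \<int>"
    and gen2: "of_int b * x - of_int a * y \<notin> \<int>"
    and gen3: "of_int c * y + of_int b * z \<notin> \<int>"
    and rn: "r \<le> n"
  shows "S (Suc r) (Suc (n - r)) a b c x y z / (of_int a ^ r * of_int b ^ (n - r) * fact r * fact (n - r))
   = (\<Sum>i=0..n. S (Suc i) (Suc (n - i)) c (-a) b z x y / (of_int c ^ i * of_int a ^ (n - i) * fact i * fact (n - i))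
        * (if r < n - i then 0 else of_nat (i choose (r - (n - i)))))
   - (\<Sum>i=0..n. S (Suc i) (Suc (n - i)) c b a z (-y) x * (-1) ^ (n - i) / (of_int c ^ i * of_int b ^ (n - i) * fact i * fact (n - i))
        * of_nat (i choose r))"
proof -
  have ra: "(of_int a :: real) \<noteq> 0" and rb: "(of_int b :: real) \<noteq> 0" and rc: "(of_int c :: real) \<noteq> 0"
    using pa pb pc by auto
  define SL where "SL i = S (Suc i) (Suc (n - i)) a b c x y z" for i
  define SR1 where "SR1 i = S (Suc i) (Suc (n - i)) c (-a) b z x y" for i
  define SR2 where "SR2 i = S (Suc i) (Suc (n - i)) c b a z (-y) x" for i
  define cL where "cL i = SL i / (of_int a ^ i * of_int b ^ (n - i) * fact i * fact (n - i))" for i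
  define c1 where "c1 i = SR1 i / (of_int c ^ i * of_int a ^ (n - i) * fact i * fact (n - i))" for i
  define c2 where "c2 i = SR2 i * (-1) ^ (n - i) / (of_int c ^ i * of_int b ^ (n - i) * fact i * fact (n - i))" for i
  define PL where "PL = (\<Sum>i=0..n. smult (cL i) (monom 1 i))"
  define PR1 where "PR1 = (\<Sum>i=0..n. smult (c1 i) (monom 1 (n - i) * [:1, 1:] ^ i))"
  define PR2 where "PR2 = (\<Sum>i=0..n. smult (c2 i) ([:1, 1:] ^ i))"
  have pev: "poly PL l = poly (PR1 - PR2) l" for l
  proof -
    have bal: "of_int a * (l / of_int a) + of_int b * (1 / of_int b) + of_int c * (- (l + 1) / of_int c) = 0"
      using ra rb rc by (simp add: field_simps)
    note I = fps_identity[OF pa pb pc ev bal gen1 gen2 gen3]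
    have "fps_nth (\<Sum>\<mu>\<in>{0..<c}. fps_const ((-1) powi \<mu>) * EGs (l / of_int a) (of_int a * (of_int \<mu> + z) / of_int c + x)
            * EGs (1 / of_int b) (of_int b * (of_int \<mu> + z) / of_int c + y)) n
       = fps_nth (\<Sum>\<mu>\<in>{0..<b}. fps_const ((-1) powi \<mu>) * EGs (- (- (l + 1) / of_int c)) (of_int c * (of_int \<mu> + y) / of_int b + z)
            * EGs (l / of_int a) (of_int (-a) * (of_int \<mu> + y) / of_int b + x)) n
       - fps_nth (\<Sum>\<mu>\<in>{0..<a}. fps_const ((-1) powi \<mu>) * EGs (- (- (l + 1) / of_int c)) (of_int c * (of_int \<mu> + x) / of_int a + z)
            * EGs (- (1 / of_int b)) (of_int b * (of_int \<mu> + x) / of_int a + - y)) n"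
      unfolding I fps_sub_nth ..
    then have E: "(\<Sum>i=0..n. SL i * ((l / of_int a) ^ i * (1 / of_int b) ^ (n - i) / (fact i * fact (n - i))))
       = (\<Sum>i=0..n. SR1 i * ((- (- (l + 1) / of_int c)) ^ i * (l / of_int a) ^ (n - i) / (fact i * fact (n - i))))
       - (\<Sum>i=0..n. SR2 i * ((- (- (l + 1) / of_int c)) ^ i * (- (1 / of_int b)) ^ (n - i) / (fact i * fact (n - i))))"
      unfolding coeff_pair SL_def SR1_def SR2_def S_sum .
    have neg: "- (- (l + 1) / of_int c) = (l + 1) / (of_int c :: real)" by (metis minus_divide_left minus_minus)
    have L: "poly PL l = (\<Sum>i=0..n. SL i * ((l / of_int a) ^ i * (1 / of_int b) ^ (n - i) / (fact i * fact (n - i))))"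
      unfolding PL_def poly_sum poly_smult poly_monom cL_def
      by (rule sum.cong[OF refl]) (simp add: power_divide field_simps)
    have R1: "poly PR1 l = (\<Sum>i=0..n. SR1 i * ((- (- (l + 1) / of_int c)) ^ i * (l / of_int a) ^ (n - i) / (fact i * fact (n - i))))"
      unfolding PR1_def poly_sum poly_smult poly_mult poly_monom poly_power c1_def neg
      by (rule sum.cong[OF refl]) (simp add: power_divide field_simps)
    have R2: "poly PR2 l = (\<Sum>i=0..n. SR2 i * ((- (- (l + 1) / of_int c)) ^ i * (- (1 / of_int b)) ^ (n - i) / (fact i * fact (n - i))))"
      unfolding PR2_def poly_sum poly_smult poly_power c2_def neg
      by (rule sum.cong[OF refl]) (simp add: power_divide power_minus[of "1 / of_int b"] field_simps)
    show ?thesis unfolding poly_diff L R1 R2 E ..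
  qed
  have "PL = PR1 - PR2" using pev poly_eq_poly_eq_iff by blast
  then have C: "coeff PL r = coeff PR1 r - coeff PR2 r" by simp
  have CL: "coeff PL r = cL r"
  proof -
    have "coeff PL r = (\<Sum>i=0..n. cL i * (if i = r then 1 else 0))"
      unfolding PL_def coeff_sum coeff_smult coeff_monom ..
    also have "\<dots> = (\<Sum>i=0..n. if i = r then cL i else 0)" by (rule sum.cong) auto
    also have "\<dots> = cL r" using rn by (simp add: sum.delta)
    finally show ?thesis .
  qed
  have CR1: "coeff PR1 r = (\<Sum>i=0..n. c1 i * (if r < n - i then 0 else of_nat (i choose (r - (n - i)))))"
    unfolding PR1_def coeff_sum coeff_smult coeff_monom_mult coeff_11 by (simp only: mult_1_left)
  have CR2: "coeff PR2 r = (\<Sum>i=0..n. c2 i * of_nat (i choose r))"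
    unfolding PR2_def coeff_sum coeff_smult coeff_11 ..
  show ?thesis using C unfolding CL CR1 CR2 cL_def c1_def c2_def SL_def SR1_def SR2_def
    by (simp add: mult_ac)
qed

lemma sum1_conv:
  fixes A C :: real and F :: "nat \<Rightarrow> nat \<Rightarrow> real" and r m :: nat
  assumes A: "A \<noteq> 0" and C: "C \<noteq> 0"
  shows "(\<Sum>j=1..Suc r. real (r choose (j - 1)) * A powi (1 - int j) * C powi (1 + int j - int (Suc r) - int (Suc m))
            * F (Suc r + Suc m - j) j)
    = fact r * fact m * (\<Sum>i=0..r+m. F (Suc i) (Suc (r + m - i)) / (C ^ i * A ^ (r + m - i) * fact i * fact (r + m - i))
            * (if r < r + m - i then 0 else of_nat (i choose (r - (r + m - i)))))"
proof -
  define T where "T j = real (r choose (j - 1)) * A powi (1 - int j) * C powi (1 + int j - int (Suc r) - int (Suc m))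
            * F (Suc r + Suc m - j) j" for j
  define G where "G i = F (Suc i) (Suc (r + m - i)) / (C ^ i * A ^ (r + m - i) * fact i * fact (r + m - i))
            * (if r < r + m - i then 0 else of_nat (i choose (r - (r + m - i))))" for i
  have L: "(\<Sum>j=1..Suc r. T j) = (\<Sum>i=m..r+m. T (r + m + 1 - i))"
    proof (rule sum.reindex_bij_witness[where i="\<lambda>i. r+m+1-i" and j="\<lambda>j. r+m+1-j"])
    fix a assume "a \<in> {1..Suc r}"
    then have h: "1 \<le> a" "a \<le> Suc r" by auto
    show "r + m + 1 - (r + m + 1 - a) = a" using h by arith
    show "r + m + 1 - a \<in> {m..r + m}" using h by (simp, arith)
    show "T (r + m + 1 - (r + m + 1 - a)) = T a" using h by (intro arg_cong[where f = T]) arith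
  next
    fix b assume "b \<in> {m..r + m}"
    then have h: "m \<le> b" "b \<le> r + m" by auto
    show "r + m + 1 - (r + m + 1 - b) = b" using h by arith
    show "r + m + 1 - b \<in> {1..Suc r}" using h by (simp, arith)
  qed
  have R: "(\<Sum>i=0..r+m. G i) = (\<Sum>i=m..r+m. G i)"
  proof (rule sum.mono_neutral_right)
    show "finite {0..r+m}" by simp
    show "{m..r+m} \<subseteq> {0..r+m}" by auto
    show "\<forall>i\<in>{0..r+m} - {m..r+m}. G i = 0"
    proof
      fix i assume "i \<in> {0..r+m} - {m..r+m}"
      then have "i < m" by auto
      then have "r < r + m - i" by arith
      then show "G i = 0" unfolding G_def by (simp only: if_True mult_zero_right)
    qed
  qed
  have TG: "T (r + m + 1 - i) = fact r * fact m * G i" if "i \<in> {m..r+m}" for i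
  proof -
    define t where "t = i - m"
    have t: "i = m + t" using that t_def by simp
    define u where "u = r - t"
    have u: "r = t + u" using that t_def u_def by simp
    have e1: "r + m + 1 - i = Suc u" "r + m - i = u" "r - (r + m - i) = t" "Suc r + Suc m - Suc u = Suc i"
      "Suc u - 1 = u" "r - u = t" "\<not> r < u" using t u by auto
    have p1: "(1::int) - int (Suc u) = - int u" by simp
    have p2: "1 + int (Suc u) - int (Suc r) - int (Suc m) = - int i" using t u by simp
    have b1: "real (r choose u) = fact r / (fact u * fact t)" using u binomial_fact[of u r] by simp
    have b2: "real (i choose t) = fact i / (fact t * fact m)" using t binomial_fact[of t i] by simp
    show ?thesis unfolding T_def G_def e1 p1 p2 power_int_minus power_int_of_nat b1 b2 using A C \<open>\<not> r < u\<close>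
      by (simp add: field_simps)
  qed
  show ?thesis unfolding T_def[symmetric] G_def[symmetric] L R sum_distrib_left
    by (rule sum.cong[OF refl]) (rule TG)
qed

lemma sum2_conv:
  fixes B C :: real and F :: "nat \<Rightarrow> nat \<Rightarrow> real" and r m :: nat
  assumes B: "B \<noteq> 0" and C: "C \<noteq> 0"
  shows "(\<Sum>h=1..Suc m. real (m choose (h - 1)) * (-1) ^ h * B powi (1 - int h) * C powi (1 + int h - int (Suc r) - int (Suc m))
            * F (Suc r + Suc m - h) h)
    = - (fact r * fact m * (\<Sum>i=0..r+m. F (Suc i) (Suc (r + m - i)) * (-1) ^ (r + m - i) / (C ^ i * B ^ (r + m - i) * fact i * fact (r + m - i))
            * of_nat (i choose r)))"
proof -
  define T where "T h = real (m choose (h - 1)) * (-1) ^ h * B powi (1 - int h) * C powi (1 + int h - int (Suc r) - int (Suc m))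
            * F (Suc r + Suc m - h) h" for h
  define G where "G i = F (Suc i) (Suc (r + m - i)) * (-1) ^ (r + m - i) / (C ^ i * B ^ (r + m - i) * fact i * fact (r + m - i))
            * of_nat (i choose r)" for i
  have L: "(\<Sum>h=1..Suc m. T h) = (\<Sum>i=r..r+m. T (r + m + 1 - i))"
    proof (rule sum.reindex_bij_witness[where i="\<lambda>i. r+m+1-i" and j="\<lambda>j. r+m+1-j"])
    fix a assume "a \<in> {1..Suc m}"
    then have h: "1 \<le> a" "a \<le> Suc m" by auto
    show "r + m + 1 - (r + m + 1 - a) = a" using h by arith
    show "r + m + 1 - a \<in> {r..r + m}" using h by (simp, arith)
    show "T (r + m + 1 - (r + m + 1 - a)) = T a" using h by (intro arg_cong[where f = T]) arith
  next
    fix b assume "b \<in> {r..r + m}"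
    then have h: "r \<le> b" "b \<le> r + m" by auto
    show "r + m + 1 - (r + m + 1 - b) = b" using h by arith
    show "r + m + 1 - b \<in> {1..Suc m}" using h by (simp, arith)
  qed
  have R: "(\<Sum>i=0..r+m. G i) = (\<Sum>i=r..r+m. G i)"
  proof (rule sum.mono_neutral_right)
    show "finite {0..r+m}" by simp
    show "{r..r+m} \<subseteq> {0..r+m}" by auto
    show "\<forall>i\<in>{0..r+m} - {r..r+m}. G i = 0"
    proof
      fix i assume "i \<in> {0..r+m} - {r..r+m}"
      then have "i < r" by auto
      then have "i choose r = 0" by (rule binomial_eq_0)
      then show "G i = 0" unfolding G_def by (simp only: of_nat_0 mult_zero_right)
    qed
  qed
  have TG: "T (r + m + 1 - i) = - (fact r * fact m * G i)" if "i \<in> {r..r+m}" for i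
  proof -
    define t where "t = i - r"
    have t: "i = r + t" using that t_def by simp
    define u where "u = m - t"
    have u: "m = t + u" using that t_def u_def by simp
    have e1: "r + m + 1 - i = Suc u" "r + m - i = u" "Suc r + Suc m - Suc u = Suc i"
      "Suc u - 1 = u" using t u by auto
    have p1: "(1::int) - int (Suc u) = - int u" by simp
    have p2: "1 + int (Suc u) - int (Suc r) - int (Suc m) = - int i" using t u by simp
    have b1: "real (m choose u) = fact m / (fact u * fact t)" using u binomial_fact[of u m] by simp
    have b2: "real (i choose r) = fact i / (fact r * fact t)" using t binomial_fact[of r i] by simp
    show ?thesis unfolding T_def G_def e1 p1 p2 power_int_minus power_int_of_nat b1 b2 using B C
      by (simp add: field_simps)
  qed
  have "(\<Sum>i=r..r+m. T (r + m + 1 - i)) = (\<Sum>i=r..r+m. - (fact r * fact m * G i))"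
    by (rule sum.cong[OF refl]) (rule TG)
  then show ?thesis unfolding T_def[symmetric] G_def[symmetric] L R sum_distrib_left sum_negf .
qed

theorem thm_generic:
  fixes a b c :: int and p q :: nat and x y z :: real
  assumes pa: "a > 0" and pb: "b > 0" and pc: "c > 0" and ev: "even (a + b + c)"
    and hp: "p \<ge> 1" and hq: "q \<ge> 1"
    and gen1: "of_int c * x + of_int a * z \<notin> \<int>"
    and gen2: "of_int b * x - of_int a * y \<notin> \<int>"
    and gen3: "of_int c * y + of_int b * z \<notin> \<int>"
  shows "real_of_int a powi (1 - int p) * real_of_int b powi (1 - int q) * S p q a b c x y z
    = (\<Sum>j=1..p. real (p - 1 choose (j - 1)) * real_of_int a powi (1 - int j)
          * real_of_int c powi (1 + int j - int p - int q) * S (p + q - j) j c (-a) b z x y)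
    + (\<Sum>h=1..q. real (q - 1 choose (h - 1)) * (-1) ^ h * real_of_int b powi (1 - int h)
          * real_of_int c powi (1 + int h - int p - int q) * S (p + q - h) h c b a z (-y) x)"
proof -
  obtain r where r: "p = Suc r" using hp by (metis Suc_le_D One_nat_def)
  obtain m where m: "q = Suc m" using hq by (metis Suc_le_D One_nat_def)
  have ra: "(of_int a :: real) \<noteq> 0" and rb: "(of_int b :: real) \<noteq> 0" and rc: "(of_int c :: real) \<noteq> 0"
    using pa pb pc by auto
  note CI = coeff_identity[OF pa pb pc ev gen1 gen2 gen3, of r "r + m"]
  have rm: "r + m - r = m" by simp
  have CI': "S (Suc r) (Suc m) a b c x y z / (of_int a ^ r * of_int b ^ m * fact r * fact m)
   = (\<Sum>i=0..r+m. S (Suc i) (Suc (r + m - i)) c (-a) b z x y / (of_int c ^ i * of_int a ^ (r + m - i) * fact i * fact (r + m - i))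
        * (if r < r + m - i then 0 else of_nat (i choose (r - (r + m - i)))))
   - (\<Sum>i=0..r+m. S (Suc i) (Suc (r + m - i)) c b a z (-y) x * (-1) ^ (r + m - i) / (of_int c ^ i * of_int b ^ (r + m - i) * fact i * fact (r + m - i))
        * of_nat (i choose r))"
    using CI unfolding rm by simp
  note S1 = sum1_conv[OF ra rc, where F = "\<lambda>p q. S p q c (-a) b z x y" and r = r and m = m]
  note S2 = sum2_conv[OF rb rc, where F = "\<lambda>p q. S p q c b a z (-y) x" and r = r and m = m]
  have lhs: "real_of_int a powi (1 - int p) * real_of_int b powi (1 - int q) * S p q a b c x y z
      = fact r * fact m * (S (Suc r) (Suc m) a b c x y z / (of_int a ^ r * of_int b ^ m * fact r * fact m))"
  proof -
    have e: "(1::int) - int (Suc r) = - int r" "(1::int) - int (Suc m) = - int m" by simp_all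
    show ?thesis unfolding r m e power_int_minus power_int_of_nat by (simp add: field_simps)
  qed
  show ?thesis unfolding lhs CI' right_diff_distrib
    using S1 S2 unfolding r m by simp
qed

lemma euler_poly_expand:
  "euler_poly n v = fact n * (\<Sum>i=0..n. (2 * v ^ i / fact i) * fps_nth (inverse (fps_exp 1 + 1 :: real fps)) (n - i))"
proof -
  have "(2 :: real fps) * fps_exp v = fps_const 2 * fps_exp v" by (simp add: numeral_fps_const)
  then have "fps_nth (2 * fps_exp v * inverse (fps_exp 1 + 1)) n =
      (\<Sum>i=0..n. fps_nth (fps_const 2 * fps_exp v) i * fps_nth (inverse (fps_exp 1 + 1 :: real fps)) (n - i))"
    by (simp only: fps_mult_nth)
  also have "\<dots> = (\<Sum>i=0..n. (2 * v ^ i / fact i) * fps_nth (inverse (fps_exp 1 + 1 :: real fps)) (n - i))"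
    by (simp only: fps_mult_left_const_nth fps_exp_nth of_nat_fact times_divide_eq_right fact_nonzero)
  finally show ?thesis by (simp only: euler_poly_def)
qed

lemma euler_poly_cont: "isCont (euler_poly n) v"
  unfolding euler_poly_expand[abs_def] by (intro continuous_intros) simp

lemma euler_fun_right: "(euler_fun n \<longlongrightarrow> euler_fun n w) (at_right w)"
proof -
  define g where "g t = (-1) powi \<lfloor>w\<rfloor> * euler_poly n (t - of_int \<lfloor>w\<rfloor>)" for t
  have gc: "isCont g w" unfolding g_def
    by (intro continuous_intros isCont_o2[OF _ euler_poly_cont])
  then have "(g \<longlongrightarrow> g w) (at w)" by (simp add: isCont_def)
  moreover have le: "at_right w \<le> at w" by (rule at_le) simp
  ultimately have gt: "(g \<longlongrightarrow> g w) (at_right w)" by (rule tendsto_mono[rotated])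
  have gw: "g w = euler_fun n w" by (simp add: g_def euler_fun_def)
  have ev: "eventually (\<lambda>t. g t = euler_fun n t) (at_right w)"
    unfolding eventually_at_right_field
  proof (intro exI[of _ "of_int \<lfloor>w\<rfloor> + 1"] conjI allI impI)
    show "w < of_int \<lfloor>w\<rfloor> + 1" by linarith
    fix t assume "w < t" "t < of_int \<lfloor>w\<rfloor> + 1"
    then have "\<lfloor>t\<rfloor> = \<lfloor>w\<rfloor>" unfolding floor_eq_iff by linarith
    then show "g t = euler_fun n t" by (simp add: g_def euler_fun_def)
  qed
  show ?thesis using tendsto_cong[OF ev] gt gw by simp
qed

lemma euler_fun_line:
  fixes f :: "real \<Rightarrow> real"
  assumes "k > 0" "\<And>t. f t = k * t + f 0"
  shows "((\<lambda>t. euler_fun n (f t)) \<longlongrightarrow> euler_fun n (f 0)) (at_right 0)"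
proof -
  have fl: "filterlim f (at_right (f 0)) (at_right 0)"
    unfolding filterlim_at
  proof
    have "\<forall>t. 0 < t \<and> t < 1 \<longrightarrow> f t \<in> {f 0<..} \<and> f t \<noteq> f 0"
    proof (intro allI impI)
      fix t :: real assume h: "0 < t \<and> t < 1"
      have "k * t > 0" using assms(1) h by simp
      then have "f t > f 0" using assms(2)[of t] by simp
      then show "f t \<in> {f 0<..} \<and> f t \<noteq> f 0" by simp
    qed
    then show "eventually (\<lambda>t. f t \<in> {f 0<..} \<and> f t \<noteq> f 0) (at_right 0)"
      unfolding eventually_at_right_field by (metis zero_less_one)
    define c0 where "c0 = f 0"
    have fe: "f = (\<lambda>t. k * t + c0)" unfolding c0_def by (rule ext) (rule assms(2))
    have "((\<lambda>t. k * t + c0) \<longlongrightarrow> k * 0 + c0) (at_right 0)" by (intro tendsto_intros)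
    then show "(f \<longlongrightarrow> f 0) (at_right 0)" unfolding c0_def[symmetric] fe by simp
  qed
  show ?thesis by (rule filterlim_compose[OF euler_fun_right fl])
qed

lemma eventually_nonint:
  fixes w k :: real
  assumes "k > 0"
  shows "eventually (\<lambda>t. w + k * t \<notin> \<int>) (at_right 0)"
  unfolding eventually_at_right_field
proof (intro exI[of _ "(of_int \<lfloor>w\<rfloor> + 1 - w) / k"] conjI allI impI)
  show "0 < (of_int \<lfloor>w\<rfloor> + 1 - w) / k" using assms by (simp add: field_simps) linarith
  fix t :: real assume t: "0 < t" "t < (of_int \<lfloor>w\<rfloor> + 1 - w) / k"
  have 1: "w < w + k * t" using t assms by simp
  have "k * t < of_int \<lfloor>w\<rfloor> + 1 - w" using t assms by (simp add: field_simps)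
  then have 2: "w + k * t < of_int \<lfloor>w\<rfloor> + 1" by simp
  show "w + k * t \<notin> \<int>"
  proof
    assume "w + k * t \<in> \<int>"
    then obtain n where n: "w + k * t = of_int n" by (metis Ints_cases)
    have "of_int \<lfloor>w\<rfloor> < (of_int n :: real)" using 1 n by linarith
    then have a1: "\<lfloor>w\<rfloor> < n" by (simp only: of_int_less_iff)
    have "(of_int n :: real) < of_int (\<lfloor>w\<rfloor> + 1)" using 2 n by simp
    then have a2: "n < \<lfloor>w\<rfloor> + 1" by (simp only: of_int_less_iff)
    show False using a1 a2 by linarith
  qed
qed

lemma S_lim_gen:
  fixes U V :: "int \<Rightarrow> real \<Rightarrow> real"
  assumes "\<And>\<mu>. \<exists>k>0. \<forall>t. U \<mu> t = k * t + U \<mu> 0"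
    and "\<And>\<mu>. \<exists>k>0. \<forall>t. V \<mu> t = k * t + V \<mu> 0"
  shows "((\<lambda>t. \<Sum>\<mu>\<in>M. (-1) powi \<mu> * euler_fun i (U \<mu> t) * euler_fun j (V \<mu> t))
      \<longlongrightarrow> (\<Sum>\<mu>\<in>M. (-1) powi \<mu> * euler_fun i (U \<mu> 0) * euler_fun j (V \<mu> 0))) (at_right 0)"
proof (intro tendsto_sum tendsto_mult tendsto_const)
  fix \<mu>
  obtain k where k: "k > 0" "\<forall>t. U \<mu> t = k * t + U \<mu> 0" using assms(1) by blast
  show "((\<lambda>t. euler_fun i (U \<mu> t)) \<longlongrightarrow> euler_fun i (U \<mu> 0)) (at_right 0)"
    by (rule euler_fun_line[where f = "U \<mu>", OF k(1)]) (use k(2) in blast)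
  obtain k' where k': "k' > 0" "\<forall>t. V \<mu> t = k' * t + V \<mu> 0" using assms(2) by blast
  show "((\<lambda>t. euler_fun j (V \<mu> t)) \<longlongrightarrow> euler_fun j (V \<mu> 0)) (at_right 0)"
    by (rule euler_fun_line[where f = "V \<mu>", OF k'(1)]) (use k'(2) in blast)
qed

lemma S_lim1:
  fixes a b c :: int
  assumes pa: "a > 0" and pb: "b > 0" and pc: "c > 0"
  shows "((\<lambda>t. S P Q a b c (x + t) y (z + t)) \<longlongrightarrow> S P Q a b c x y z) (at_right 0)"
proof -
  have rc: "(of_int c :: real) > 0" using pc by simp
  have H: "((\<lambda>t. \<Sum>\<mu>\<in>{0..<c}. (-1) powi \<mu> * euler_fun (P - 1) (of_int a * (of_int \<mu> + (z + t)) / of_int c + (x + t))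
        * euler_fun (Q - 1) (of_int b * (of_int \<mu> + (z + t)) / of_int c + y))
      \<longlongrightarrow> (\<Sum>\<mu>\<in>{0..<c}. (-1) powi \<mu> * euler_fun (P - 1) (of_int a * (of_int \<mu> + (z + 0)) / of_int c + (x + 0))
        * euler_fun (Q - 1) (of_int b * (of_int \<mu> + (z + 0)) / of_int c + y))) (at_right 0)"
  proof (rule S_lim_gen)
    fix \<mu> :: int
    show "\<exists>k>0. \<forall>t. of_int a * (of_int \<mu> + (z + t)) / of_int c + (x + t) =
        k * t + (of_int a * (of_int \<mu> + (z + 0)) / of_int c + (x + 0))"
      using pa rc by (intro exI[of _ "of_int a / of_int c + 1"] conjI allI) (simp_all add: field_simps)
    show "\<exists>k>0. \<forall>t. of_int b * (of_int \<mu> + (z + t)) / of_int c + y =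
        k * t + (of_int b * (of_int \<mu> + (z + 0)) / of_int c + y)"
      using pb rc by (intro exI[of _ "of_int b / of_int c"] conjI allI) (simp_all add: field_simps)
  qed
  then show ?thesis unfolding S_def add_0_right .
qed

lemma S_lim2:
  fixes a b c :: int
  assumes pb: "b > 0"
  shows "((\<lambda>t. S P Q c (-a) b (z + t) (x + t) y) \<longlongrightarrow> S P Q c (-a) b z x y) (at_right 0)"
proof -
  have H: "((\<lambda>t. \<Sum>\<mu>\<in>{0..<b}. (-1) powi \<mu> * euler_fun (P - 1) (of_int c * (of_int \<mu> + y) / of_int b + (z + t))
        * euler_fun (Q - 1) (of_int (-a) * (of_int \<mu> + y) / of_int b + (x + t)))
      \<longlongrightarrow> (\<Sum>\<mu>\<in>{0..<b}. (-1) powi \<mu> * euler_fun (P - 1) (of_int c * (of_int \<mu> + y) / of_int b + (z + 0))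
        * euler_fun (Q - 1) (of_int (-a) * (of_int \<mu> + y) / of_int b + (x + 0)))) (at_right 0)"
  proof (rule S_lim_gen)
    fix \<mu> :: int
    show "\<exists>k>0. \<forall>t. of_int c * (of_int \<mu> + y) / of_int b + (z + t) =
        k * t + (of_int c * (of_int \<mu> + y) / of_int b + (z + 0))"
      by (intro exI[of _ 1] conjI allI) simp_all
    show "\<exists>k>0. \<forall>t. of_int (-a) * (of_int \<mu> + y) / of_int b + (x + t) =
        k * t + (of_int (-a) * (of_int \<mu> + y) / of_int b + (x + 0))"
      by (intro exI[of _ 1] conjI allI) simp_all
  qed
  then show ?thesis unfolding S_def add_0_right .
qed

lemma S_lim3:
  fixes a b c :: int
  assumes pa: "a > 0" and pb: "b > 0" and pc: "c > 0"
  shows "((\<lambda>t. S P Q c b a (z + t) (-y) (x + t)) \<longlongrightarrow> S P Q c b a z (-y) x) (at_right 0)"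
proof -
  have ra: "(of_int a :: real) > 0" using pa by simp
  have H: "((\<lambda>t. \<Sum>\<mu>\<in>{0..<a}. (-1) powi \<mu> * euler_fun (P - 1) (of_int c * (of_int \<mu> + (x + t)) / of_int a + (z + t))
        * euler_fun (Q - 1) (of_int b * (of_int \<mu> + (x + t)) / of_int a + - y))
      \<longlongrightarrow> (\<Sum>\<mu>\<in>{0..<a}. (-1) powi \<mu> * euler_fun (P - 1) (of_int c * (of_int \<mu> + (x + 0)) / of_int a + (z + 0))
        * euler_fun (Q - 1) (of_int b * (of_int \<mu> + (x + 0)) / of_int a + - y))) (at_right 0)"
  proof (rule S_lim_gen)
    fix \<mu> :: int
    show "\<exists>k>0. \<forall>t. of_int c * (of_int \<mu> + (x + t)) / of_int a + (z + t) =
        k * t + (of_int c * (of_int \<mu> + (x + 0)) / of_int a + (z + 0))"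
      using pc ra by (intro exI[of _ "of_int c / of_int a + 1"] conjI allI) (simp_all add: field_simps)
    show "\<exists>k>0. \<forall>t. of_int b * (of_int \<mu> + (x + t)) / of_int a + - y =
        k * t + (of_int b * (of_int \<mu> + (x + 0)) / of_int a + - y)"
      using pb ra by (intro exI[of _ "of_int b / of_int a"] conjI allI) (simp_all add: field_simps)
  qed
  then show ?thesis unfolding S_def add_0_right .
qed

theorem theorem2:
  fixes a b c :: int and p q :: nat and x y z :: real
  assumes "a > 0" and "b > 0" and "c > 0"
    and "coprime a b" and "coprime b c" and "coprime a c"
    and "even (a + b + c)"
    and "p \<ge> 1" and "q \<ge> 1"
  shows "real_of_int a powi (1 - int p) * real_of_int b powi (1 - int q) * S p q a b c x y z
    = (\<Sum>j=1..p. real (p - 1 choose (j - 1)) * real_of_int a powi (1 - int j)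
          * real_of_int c powi (1 + int j - int p - int q) * S (p + q - j) j c (-a) b z x y)
    + (\<Sum>h=1..q. real (q - 1 choose (h - 1)) * (-1) ^ h * real_of_int b powi (1 - int h)
          * real_of_int c powi (1 + int h - int p - int q) * S (p + q - h) h c b a z (-y) x)"
proof -
  note pa = assms(1) and pb = assms(2) and pc = assms(3) and ev = assms(7) and hp = assms(8) and hq = assms(9)
  define L where "L x' z' = real_of_int a powi (1 - int p) * real_of_int b powi (1 - int q) * S p q a b c x' y z'" for x' z'
  define R where "R x' z' = (\<Sum>j=1..p. real (p - 1 choose (j - 1)) * real_of_int a powi (1 - int j)
          * real_of_int c powi (1 + int j - int p - int q) * S (p + q - j) j c (-a) b z' x' y)
    + (\<Sum>h=1..q. real (q - 1 choose (h - 1)) * (-1) ^ h * real_of_int b powi (1 - int h)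
          * real_of_int c powi (1 + int h - int p - int q) * S (p + q - h) h c b a z' (-y) x')" for x' z'
  have tL: "((\<lambda>t. L (x + t) (z + t)) \<longlongrightarrow> L x z) (at_right 0)"
    unfolding L_def by (intro tendsto_intros S_lim1 pa pb pc)
  have tR: "((\<lambda>t. R (x + t) (z + t)) \<longlongrightarrow> R x z) (at_right 0)"
    unfolding R_def by (intro tendsto_intros S_lim2 S_lim3 pa pb pc)
  have k1: "(of_int a + of_int c :: real) > 0" and k2: "(of_int b :: real) > 0"
    using pa pb pc by simp_all
  have ev1: "eventually (\<lambda>t. (of_int c * x + of_int a * z) + (of_int a + of_int c) * t \<notin> \<int>) (at_right 0)"
    by (rule eventually_nonint[OF k1])
  have ev2: "eventually (\<lambda>t. (of_int b * x - of_int a * y) + of_int b * t \<notin> \<int>) (at_right 0)"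
    by (rule eventually_nonint[OF k2])
  have ev3: "eventually (\<lambda>t. (of_int c * y + of_int b * z) + of_int b * t \<notin> \<int>) (at_right 0)"
    by (rule eventually_nonint[OF k2])
  have evq: "eventually (\<lambda>t. L (x + t) (z + t) = R (x + t) (z + t)) (at_right 0)"
    using ev1 ev2 ev3
  proof eventually_elim
    case (elim t)
    have g1: "of_int c * (x + t) + of_int a * (z + t) \<notin> \<int>"
    proof -
      have "of_int c * (x + t) + of_int a * (z + t) = (of_int c * x + of_int a * z) + (of_int a + of_int c) * t"
        by (simp add: algebra_simps)
      then show ?thesis using elim(1) by metis
    qed
    have g2: "of_int b * (x + t) - of_int a * y \<notin> \<int>"
    proof -
      have "of_int b * (x + t) - of_int a * y = (of_int b * x - of_int a * y) + of_int b * t"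
        by (simp add: algebra_simps)
      then show ?thesis using elim(2) by metis
    qed
    have g3: "of_int c * y + of_int b * (z + t) \<notin> \<int>"
    proof -
      have "of_int c * y + of_int b * (z + t) = (of_int c * y + of_int b * z) + of_int b * t"
        by (simp add: algebra_simps)
      then show ?thesis using elim(3) by metis
    qed
    show ?case unfolding L_def R_def by (rule thm_generic[OF pa pb pc ev hp hq g1 g2 g3])
  qed
  have "((\<lambda>t. R (x + t) (z + t)) \<longlongrightarrow> L x z) (at_right 0)"
    using tendsto_cong[OF evq] tL by simp
  then have "L x z = R x z" using tR by (intro tendsto_unique[of "at_right (0::real)"]) simp_all
  then show ?thesis unfolding L_def R_def .
qed

end
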